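(* For $n\ge1$ let $C_n^\Sigma:=\sum_{R\subseteq[n-1]}C_n^R$, where $C_n^R$ is the number of $R$-312-avoiding $R$-permutations. Then $C_n^\Sigma$ equals: (i) the number of ordered set partitions of $[n]$ that avoid the pattern 312; (ii) the number of rightmost clump deleting chains for $[n]$; and also the number of tableaux that are gapless $\lambda$-keys for some partition $\lambda$ whose column lengths are pairwise distinct and all less than $n$ (the null tableau of the empty shape included).
   Context: Fix $n\ge1$; $[m]=\{1,\dots,m\}$. For $R\subseteq[n-1]$ with elements $q_1<\dots<q_r$, $q_0:=0$, $q_{r+1}:=n$: an $R$-permutation is a permutation $\pi$ of $[n]$ (one-line notation) strictly increasing on each index set $\{q_{h-1}+1,\dots,q_h\}$; it is $R$-312-containing if there exist $h\in[r-1]$ and $1\le a\le q_h<b\le q_{h+1}<c\le n$ with $\pi_b<\pi_c<\pi_a$, and $R$-312-avoiding otherwise. An ordered set partition of $[n]$ is a sequence $(A_1,\dots,A_k)$, $k\ge1$, of nonempty pairwise disjoint sets with union $[n]$; it avoids 312 if there are no $i<j<l$ and $a\in A_i$, $b\in A_j$, $c\in A_l$ with $b<c<a$. An $R$-chain is $\emptyset=B_0\subset B_1\subset\cdots\subset B_{r+1}=[n]$ with $|B_h|=q_h$. A clump of a finite set of integers is a maximal subset of consecutive integers; clumps are indexed $L_1,\dots,L_f$ increasingly. An $R$-chain is $R$-rightmost clump deleting if for each $h\in[r]$, writing $B_{h+1}=L_1\cup\cdots\cup L_f$ as clumps, there is $e\in[f]$ with $L_e\cup\cdots\cup L_f\supseteq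 B_{h+1}\setminus B_h\supseteq L_{e+1}\cup\cdots\cup L_f$. A rightmost clump deleting chain for $[n]$ is a strictly increasing chain of sets $\emptyset=B_0\subsetneq B_1\subsetneq\cdots\subsetneq B_{k}=[n]$ ($k\ge1$) that is an $R$-rightmost clump deleting $R$-chain for $R:=\{|B_1|,\dots,|B_{k-1}|\}$. A partition is $\lambda=(\lambda_1\ge\cdots\ge\lambda_n\ge0)\in\mathbb{Z}^n$, with column lengths $\zeta_j:=\#\{i:\lambda_i\ge j\}$, $j\in[\lambda_1]$; let $q_1<\dots<q_r$ be its distinct column lengths less than $n$. A tableau of shape $\lambda$ fills its boxes with values in $[n]$, strictly increasing down columns, weakly increasing along rows. A $\lambda$-key is such a tableau whose column entry sets weakly decrease (under inclusion) from left to right. A $\lambda$-key is gapless if for every $h\in[r-1]$: letting $b$ be the smallest value in the columns of length $q_{h+1}$ not appearing in the columns of length $q_h$, and $m$ the largest value in the columns of length $q_h$, if $b\le m$ then every column of length $q_{h+1}$ contains all of $b,\dots,m$. *)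

theory Defs
  imports "HOL-Combinatorics.Permutations"
begin

(* q_0 = 0, q_1 < ... < q_r the elements of R, q_{r+1} = n; (qseq n R) ! h = q_h *)
definition qseq :: "nat \<Rightarrow> nat set \<Rightarrow> nat list" where
  "qseq n R = [0] @ sorted_list_of_set R @ [n]"

definition R_card :: "nat set \<Rightarrow> nat" where
  "R_card R = card R"

(* permutation of [n] in one-line notation: i \<mapsto> \<pi> i, bijection of {1..n} fixing everything else *)
definition R_permutation :: "nat \<Rightarrow> nat set \<Rightarrow> (nat \<Rightarrow> nat) \<Rightarrow> bool" where
  "R_permutation n R \<pi> \<longleftrightarrow> \<pi> permutes {1..n} \<and>
     (\<forall>h\<in>{1..R_card R + 1}.
        strict_mono_on {qseq n R ! (h - 1) + 1 .. qseq n R ! h} \<pi>)"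

definition R_312_containing :: "nat \<Rightarrow> nat set \<Rightarrow> (nat \<Rightarrow> nat) \<Rightarrow> bool" where
  "R_312_containing n R \<pi> \<longleftrightarrow>
     (\<exists>h\<in>{1..R_card R - 1}. \<exists>a b c.
        1 \<le> a \<and> a \<le> qseq n R ! h \<and> qseq n R ! h < b \<and> b \<le> qseq n R ! (h + 1) \<and>
        qseq n R ! (h + 1) < c \<and> c \<le> n \<and> \<pi> b < \<pi> c \<and> \<pi> c < \<pi> a)"

definition C_R :: "nat \<Rightarrow> nat set \<Rightarrow> nat" where
  "C_R n R = card {\<pi>. R_permutation n R \<pi> \<and> \<not> R_312_containing n R \<pi>}"

definition C_Sigma :: "nat \<Rightarrow> nat" where
  "C_Sigma n = (\<Sum>R\<in>Pow {1..n - 1}. C_R n R)"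

definition ordered_set_partition :: "nat \<Rightarrow> nat set list \<Rightarrow> bool" where
  "ordered_set_partition n As \<longleftrightarrow> length As \<ge> 1 \<and>
     (\<forall>i<length As. As ! i \<noteq> {}) \<and>
     (\<forall>i j. i < j \<and> j < length As \<longrightarrow> As ! i \<inter> As ! j = {}) \<and>
     \<Union>(set As) = {1..n}"

definition osp_avoids_312 :: "nat set list \<Rightarrow> bool" where
  "osp_avoids_312 As \<longleftrightarrow>
     \<not> (\<exists>i j l a b c. i < j \<and> j < l \<and> l < length As \<and>
          a \<in> As ! i \<and> b \<in> As ! j \<and> c \<in> As ! l \<and> b < c \<and> c < a)"

definition is_interval :: "nat set \<Rightarrow> bool" where
  "is_interval L \<longleftrightarrow> (\<exists>a b. a \<le> b \<and> L = {a..b})"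

definition clump :: "nat set \<Rightarrow> nat set \<Rightarrow> bool" where
  "clump S L \<longleftrightarrow> L \<subseteq> S \<and> is_interval L \<and>
     (\<forall>L'. is_interval L' \<and> L \<subseteq> L' \<and> L' \<subseteq> S \<longrightarrow> L' = L)"

(* Clumps are indexed increasingly L_1,...,L_f (by position, i.e. by minimum).
   Condition for B = B_{h+1}, B' = B_h: exists e with
   L_e \<union> ... \<union> L_f \<supseteq> B - B' \<supseteq> L_{e+1} \<union> ... \<union> L_f *)
definition rightmost_clump_step :: "nat set \<Rightarrow> nat set \<Rightarrow> bool" where
  "rightmost_clump_step Bh Bh1 \<longleftrightarrow>
     (\<exists>Le. clump Bh1 Le \<and>
        Bh1 - Bh \<subseteq> \<Union>{L. clump Bh1 L \<and> Min L \<ge> Min Le} \<and>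
        \<Union>{L. clump Bh1 L \<and> Min L > Min Le} \<subseteq> Bh1 - Bh)"

(* Bs = [B_1, ..., B_k], with B_0 = {} implicit:
   {} \<subset> B_1 \<subset> ... \<subset> B_k = [n], k \<ge> 1, and R-rightmost clump deleting for
   R = {|B_1|,...,|B_{k-1}|} (so r = k - 1 and the condition is for h \<in> [k-1]).
   The R-chain cardinality condition |B_h| = q_h holds automatically. *)
definition rcd_chain :: "nat \<Rightarrow> nat set list \<Rightarrow> bool" where
  "rcd_chain n Bs \<longleftrightarrow> length Bs \<ge> 1 \<and>
     {} \<subset> Bs ! 0 \<and>
     (\<forall>i. i + 1 < length Bs \<longrightarrow> Bs ! i \<subset> Bs ! (i + 1)) \<and>
     last Bs = {1..n} \<and>
     (\<forall>h\<in>{1..length Bs - 1}. rightmost_clump_step (Bs ! (h - 1)) (Bs ! h))"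

(* \<lambda> = (\<lambda>_1 \<ge> ... \<ge> \<lambda>_n \<ge> 0) as a list of length n; \<lambda>_i = lam ! (i-1) *)
definition is_partition :: "nat \<Rightarrow> nat list \<Rightarrow> bool" where
  "is_partition n lam \<longleftrightarrow> length lam = n \<and> (\<forall>i. i + 1 < n \<longrightarrow> lam ! (i + 1) \<le> lam ! i)"

definition col_len :: "nat \<Rightarrow> nat list \<Rightarrow> nat \<Rightarrow> nat" where
  "col_len n lam j = card {i\<in>{1..n}. lam ! (i - 1) \<ge> j}"

(* a tableau is given by its list of columns, column j (1-based) = T ! (j-1), top to bottom *)
definition is_tableau :: "nat \<Rightarrow> nat list \<Rightarrow> nat list list \<Rightarrow> bool" where
  "is_tableau n lam T \<longleftrightarrow> length T = lam ! 0 \<and>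
     (\<forall>j<length T. length (T ! j) = col_len n lam (j + 1)) \<and>
     (\<forall>j<length T. set (T ! j) \<subseteq> {1..n}) \<and>
     (\<forall>j<length T. sorted_wrt (<) (T ! j)) \<and>
     (\<forall>j i. j + 1 < length T \<and> i < length (T ! (j + 1)) \<longrightarrow> T ! j ! i \<le> T ! (j + 1) ! i)"

definition is_key :: "nat \<Rightarrow> nat list \<Rightarrow> nat list list \<Rightarrow> bool" where
  "is_key n lam T \<longleftrightarrow> is_tableau n lam T \<and>
     (\<forall>j. j + 1 < length T \<longrightarrow> set (T ! (j + 1)) \<subseteq> set (T ! j))"

definition short_col_lens :: "nat \<Rightarrow> nat list \<Rightarrow> nat set" where
  "short_col_lens n lam = {q. \<exists>j\<in>{1..lam ! 0}. col_len n lam j = q \<and> q < n}"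

definition cols_of_len :: "nat \<Rightarrow> nat list \<Rightarrow> nat list list \<Rightarrow> nat \<Rightarrow> nat list set" where
  "cols_of_len n lam T q = {T ! (j - 1) | j. j \<in> {1..lam ! 0} \<and> col_len n lam j = q}"

definition vals_of_len :: "nat \<Rightarrow> nat list \<Rightarrow> nat list list \<Rightarrow> nat \<Rightarrow> nat set" where
  "vals_of_len n lam T q = \<Union>(set ` cols_of_len n lam T q)"

definition gapless_key :: "nat \<Rightarrow> nat list \<Rightarrow> nat list list \<Rightarrow> bool" where
  "gapless_key n lam T \<longleftrightarrow> is_key n lam T \<and>
     (\<forall>q\<in>short_col_lens n lam. \<forall>q'\<in>short_col_lens n lam.
        q < q' \<and> \<not> (\<exists>q''\<in>short_col_lens n lam. q < q'' \<and> q'' < q') \<longrightarrow>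
        (let D = vals_of_len n lam T q' - vals_of_len n lam T q;
             m = Max (vals_of_len n lam T q) in
         D \<noteq> {} \<longrightarrow> Min D \<le> m \<longrightarrow>
         (\<forall>c\<in>cols_of_len n lam T q'. {Min D..m} \<subseteq> set c)))"

definition distinct_short_cols :: "nat \<Rightarrow> nat list \<Rightarrow> bool" where
  "distinct_short_cols n lam \<longleftrightarrow> inj_on (col_len n lam) {1..lam ! 0} \<and>
     (\<forall>j\<in>{1..lam ! 0}. col_len n lam j < n)"

end

theory Submission
  imports Defs
begin


definition inv_ok :: "nat set \<Rightarrow> nat set \<Rightarrow> bool" where
  "inv_ok C C' \<longleftrightarrow> (\<forall>y\<in>C'-C. \<forall>x\<in>C. y < x \<longrightarrow> {y..x} \<subseteq> C')"

lemma clump_exists: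
  assumes "finite S" "x \<in> S" shows "\<exists>L. clump S L \<and> x \<in> L"
proof -
  define A where "A = {a. a \<le> x \<and> {a..x} \<subseteq> S}"
  define B where "B = {b. x \<le> b \<and> {x..b} \<subseteq> S}"
  have xA: "x \<in> A" using assms by (auto simp: A_def)
  have xB: "x \<in> B" using assms by (auto simp: B_def)
  have fB: "finite B"
  proof (rule finite_subset[OF _ assms(1)])
    show "B \<subseteq> S" by (auto simp: B_def)
  qed
  define a where "a = Min A"
  define b where "b = Max B"
  have aA: "a \<in> A" unfolding a_def using xA by (intro Min_in) (auto simp: A_def)
  have bB: "b \<in> B" unfolding b_def using xB fB by (intro Max_in) auto
  have aleast: "\<And>c. c \<in> A \<Longrightarrow> a \<le> c" unfolding a_def by (rule Min_le) (auto simp: A_def)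
  have bgr: "\<And>c. c \<in> B \<Longrightarrow> c \<le> b" unfolding b_def using fB by (rule Max_ge)
  have LS: "{a..b} \<subseteq> S"
  proof
    fix z assume "z \<in> {a..b}"
    thus "z \<in> S" using aA bB unfolding A_def B_def by (cases "z \<le> x") auto
  qed
  have ab: "a \<le> b" using aA bB by (auto simp: A_def B_def)
  have "clump S {a..b}"
    unfolding clump_def is_interval_def
  proof (intro conjI allI impI)
    show "{a..b} \<subseteq> S" by (rule LS)
    show "\<exists>a' b'. a' \<le> b' \<and> {a..b} = {a'..b'}" using ab by blast
    fix L' assume H: "(\<exists>a b. a \<le> b \<and> L' = {a..b}) \<and> {a..b} \<subseteq> L' \<and> L' \<subseteq> S"
    then obtain c d where cd: "c \<le> d" "L' = {c..d}" by blast
    have "c \<le> a" "b \<le> d" using H cd ab by auto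
    have "x \<le> d" using aA bB \<open>b \<le> d\<close> by (auto simp: A_def B_def)
    have "c \<le> x" using aA \<open>c \<le> a\<close> by (auto simp: A_def)
    have "{c..x} \<subseteq> L'" using cd \<open>x \<le> d\<close> by auto
    hence "c \<in> A" using H \<open>c \<le> x\<close> by (auto simp: A_def)
    hence "a \<le> c" by (rule aleast)
    have "{x..d} \<subseteq> L'" using cd \<open>c \<le> x\<close> by auto
    hence "d \<in> B" using H \<open>x \<le> d\<close> by (auto simp: B_def)
    hence "d \<le> b" by (rule bgr)
    show "L' = {a..b}" using cd \<open>a \<le> c\<close> \<open>c \<le> a\<close> \<open>d \<le> b\<close> \<open>b \<le> d\<close> by auto
  qed
  moreover have "x \<in> {a..b}" using aA bB by (auto simp: A_def B_def)
  ultimately show ?thesis by blast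
qed

lemma clump_eq:
  assumes "clump S L1" "clump S L2" "x \<in> L1" "x \<in> L2" shows "L1 = L2"
proof -
  obtain a b where ab: "a \<le> b" "L1 = {a..b}" using assms(1) by (auto simp: clump_def is_interval_def)
  obtain c d where cd: "c \<le> d" "L2 = {c..d}" using assms(2) by (auto simp: clump_def is_interval_def)
  have U: "L1 \<union> L2 = {min a c..max b d}" using ab cd assms(3,4) by auto
  have I: "is_interval (L1 \<union> L2)" unfolding U is_interval_def using ab cd by (intro exI[of _ "min a c"] exI[of _ "max b d"]) auto
  have "L1 \<union> L2 \<subseteq> S" using assms(1,2) by (auto simp: clump_def)
  hence "L1 \<union> L2 = L1" "L1 \<union> L2 = L2" using assms(1,2) I unfolding clump_def by blast+
  thus ?thesis by simp
qed

lemma clump_Min: assumes "clump S L" shows "L = {Min L..Max L}" "Min L \<in> L" "Max L \<in> L"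
proof -
  obtain a b where ab: "a \<le> b" "L = {a..b}" using assms by (auto simp: clump_def is_interval_def)
  hence "Min L = a" "Max L = b" by (auto intro!: Min_eqI Max_eqI)
  thus "L = {Min L..Max L}" "Min L \<in> L" "Max L \<in> L" using ab by auto
qed

lemma clump_mem: assumes "clump S L" shows "z \<in> L \<longleftrightarrow> Min L \<le> z \<and> z \<le> Max L"
proof -
  have "L = {Min L..Max L}" using clump_Min[OF assms] by blast
  hence "z \<in> L \<longleftrightarrow> z \<in> {Min L..Max L}" by simp
  thus ?thesis by simp
qed

lemma clump_order:
  assumes "clump S L1" "clump S L2" "L1 \<noteq> L2" "Min L1 \<le> Min L2" "x \<in> L1" "y \<in> L2"
  shows "x < y"
proof (rule ccontr)
  assume "\<not> x < y"
  have e1: "L1 = {Min L1..Max L1}" and e2: "L2 = {Min L2..Max L2}" using clump_Min assms by blast+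
  have "Min L2 \<in> L1" using e1 e2 assms(4,5,6) \<open>\<not> x < y\<close>
    by (metis atLeastAtMost_iff le_trans not_less)
  moreover have "Min L2 \<in> L2" using clump_Min(2)[OF assms(2)] .
  ultimately show False using clump_eq assms by blast
qed

lemma clump_sub: "clump S L \<Longrightarrow> L \<subseteq> S" by (simp add: clump_def)

lemma rcd_iff:
  assumes fin: "finite C'" and ne: "C \<noteq> {}" and sub: "C \<subseteq> C'"
  shows "rightmost_clump_step C C' \<longleftrightarrow> inv_ok C C'"
proof
  assume "rightmost_clump_step C C'"
  then obtain Le where Le: "clump C' Le"
    and s1: "C' - C \<subseteq> \<Union>{L. clump C' L \<and> Min L \<ge> Min Le}"
    and s2: "\<Union>{L. clump C' L \<and> Min L > Min Le} \<subseteq> C' - C"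
    unfolding rightmost_clump_step_def by (elim exE conjE)
  show "inv_ok C C'" unfolding inv_ok_def
  proof (intro ballI impI)
    fix y x assume y: "y \<in> C' - C" and x: "x \<in> C" and yx: "y < x"
    have "y \<in> \<Union>{L. clump C' L \<and> Min L \<ge> Min Le}" using s1 y by (rule subsetD)
    then obtain L where L: "clump C' L" "Min L \<ge> Min Le" "y \<in> L" by blast
    obtain Lx where Lx: "clump C' Lx" "x \<in> Lx" using clump_exists[OF fin] x sub by blast
    have "\<not> Min Lx > Min Le" using s2 Lx x by blast
    hence "Min Lx \<le> Min L" using L by linarith
    have "Lx = L"
    proof (rule ccontr)
      assume "Lx \<noteq> L"
      hence "x < y" using clump_order[OF Lx(1) L(1) _ \<open>Min Lx \<le> Min L\<close> Lx(2) L(3)] by blast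
      thus False using yx by simp
    qed
    have "Min L \<le> y" using clump_mem[OF L(1), of y] L(3) by simp
    have "x \<le> Max L" using clump_mem[OF L(1), of x] Lx(2) \<open>Lx = L\<close> by simp
    have "{y..x} \<subseteq> L"
    proof
      fix z assume "z \<in> {y..x}"
      thus "z \<in> L" using clump_mem[OF L(1), of z] \<open>Min L \<le> y\<close> \<open>x \<le> Max L\<close> by simp
    qed
    thus "{y..x} \<subseteq> C'" using clump_sub[OF L(1)] by blast
  qed
next
  assume io: "inv_ok C C'"
  define x0 where "x0 = Max C"
  have fC: "finite C" using fin sub finite_subset by blast
  have x0C: "x0 \<in> C" unfolding x0_def using fC ne by simp
  have x0max: "\<And>z. z \<in> C \<Longrightarrow> z \<le> x0" unfolding x0_def using fC by simp
  obtain Le where Le: "clump C' Le" "x0 \<in> Le" using clump_exists[OF fin] x0C sub by blast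
  show "rightmost_clump_step C C'" unfolding rightmost_clump_step_def
  proof (intro exI conjI)
    show "clump C' Le" by (rule Le(1))
    show "C' - C \<subseteq> \<Union>{L. clump C' L \<and> Min L \<ge> Min Le}"
    proof
      fix y assume y: "y \<in> C' - C"
      obtain Ly where Ly: "clump C' Ly" "y \<in> Ly" using clump_exists[OF fin] y by blast
      have "Min Ly \<ge> Min Le"
      proof (cases "Ly = Le")
        case True thus ?thesis by simp
      next
        case False
        show ?thesis
        proof (rule ccontr)
          assume "\<not> Min Le \<le> Min Ly"
          hence "y < x0" using clump_order[OF Ly(1) Le(1) False _ Ly(2) Le(2)] by linarith
          hence "{y..x0} \<subseteq> C'" using io y x0C unfolding inv_ok_def by blast
          define L' where "L' = {Min Ly..max (Max Ly) x0}"
          have my: "Min Ly \<le> y" "y \<le> Max Ly" using clump_mem[OF Ly(1), of y] Ly(2) by simp_all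
          have "Min Ly \<le> max (Max Ly) x0" using my by linarith
          hence "is_interval L'" unfolding L'_def is_interval_def by blast
          moreover have "Ly \<subseteq> L'"
          proof
            fix z assume "z \<in> Ly"
            hence "Min Ly \<le> z" "z \<le> Max Ly" using clump_mem[OF Ly(1), of z] by simp_all
            thus "z \<in> L'" unfolding L'_def by simp
          qed
          moreover have "L' \<subseteq> C'"
          proof
            fix z assume zL: "z \<in> L'"
            show "z \<in> C'"
            proof (cases "z \<le> Max Ly")
              case True
              hence "z \<in> Ly" using zL clump_mem[OF Ly(1), of z] unfolding L'_def by simp
              thus ?thesis using clump_sub[OF Ly(1)] by blast
            next
              case False
              hence "y \<le> z" "z \<le> x0" using my zL unfolding L'_def by auto
              thus ?thesis using \<open>{y..x0} \<subseteq> C'\<close> by auto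
            qed
          qed
          moreover have cm: "\<forall>L''. is_interval L'' \<and> Ly \<subseteq> L'' \<and> L'' \<subseteq> C' \<longrightarrow> L'' = Ly"
            using Ly(1) unfolding clump_def by simp
          ultimately have "L' = Ly" by simp
          moreover have "x0 \<in> L'" unfolding L'_def using \<open>y < x0\<close> my by simp
          ultimately have "x0 \<in> Ly" by simp
          thus False using clump_eq[OF Ly(1) Le(1) _ Le(2)] False by blast
        qed
      qed
      thus "y \<in> \<Union>{L. clump C' L \<and> Min L \<ge> Min Le}" using Ly by blast
    qed
    show "\<Union>{L. clump C' L \<and> Min L > Min Le} \<subseteq> C' - C"
    proof
      fix z assume "z \<in> \<Union>{L. clump C' L \<and> Min L > Min Le}"
      then obtain L where L: "clump C' L" "Min L > Min Le" "z \<in> L" by blast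
      have "L \<noteq> Le" using L(2) by auto
      hence "x0 < z" using clump_order[OF Le(1) L(1) _ _ Le(2) L(3)] L(2) by auto
      hence "z \<notin> C" using x0max by force
      thus "z \<in> C' - C" using L clump_sub by blast
    qed
  qed
qed


definition pref :: "nat set list \<Rightarrow> nat set list" where
  "pref As = map (\<lambda>h. \<Union>(set (take (Suc h) As))) [0..<length As]"

definition diffs :: "nat set list \<Rightarrow> nat set list" where
  "diffs Bs = map (\<lambda>h. if h = 0 then Bs!0 else Bs!h - Bs!(h-1)) [0..<length Bs]"

lemma length_pref[simp]: "length (pref As) = length As" by (simp add: pref_def)
lemma length_diffs[simp]: "length (diffs Bs) = length Bs" by (simp add: diffs_def)

lemma pref_nth: assumes "h < length As" shows "pref As ! h = {x. \<exists>i\<le>h. x \<in> As!i}"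
proof -
  have "pref As ! h = \<Union>(set (take (Suc h) As))" using assms by (simp add: pref_def)
  also have "\<dots> = {x. \<exists>i\<le>h. x \<in> As!i}"
  proof (intro equalityI subsetI)
    fix x assume "x \<in> \<Union>(set (take (Suc h) As))"
    then obtain A where "A \<in> set (take (Suc h) As)" "x \<in> A" by blast
    then obtain i where "i < length (take (Suc h) As)" "take (Suc h) As ! i = A" by (auto simp: in_set_conv_nth)
    hence "i \<le> h" "x \<in> As!i" using \<open>x \<in> A\<close> by auto
    thus "x \<in> {x. \<exists>i\<le>h. x \<in> As!i}" by blast
  next
    fix x assume "x \<in> {x. \<exists>i\<le>h. x \<in> As!i}"
    then obtain i where "i \<le> h" "x \<in> As!i" by blast
    hence "take (Suc h) As ! i \<in> set (take (Suc h) As)" using assms by (intro nth_mem) simp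
    thus "x \<in> \<Union>(set (take (Suc h) As))" using \<open>i \<le> h\<close> \<open>x \<in> As!i\<close> by auto
  qed
  finally show ?thesis .
qed

lemma diffs_nth: "h < length Bs \<Longrightarrow> diffs Bs ! h = (if h = 0 then Bs!0 else Bs!h - Bs!(h-1))"
  by (simp add: diffs_def)

lemma osp_mem: assumes "ordered_set_partition n As" "x \<in> {1..n}" shows "\<exists>i<length As. x \<in> As!i"
proof -
  have "x \<in> \<Union>(set As)" using assms unfolding ordered_set_partition_def by simp
  thus ?thesis by (auto simp: in_set_conv_nth)
qed

lemma osp_sub: assumes "ordered_set_partition n As" "i < length As" "x \<in> As!i" shows "x \<in> {1..n}"
proof -
  have "As!i \<in> set As" using assms(2) by simp
  thus ?thesis using assms unfolding ordered_set_partition_def by blast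
qed

lemma osp_uniq: assumes "ordered_set_partition n As" "i < length As" "j < length As" "x \<in> As!i" "x \<in> As!j"
  shows "i = j"
proof (rule ccontr)
  assume "i \<noteq> j"
  hence "i < j \<or> j < i" by linarith
  thus False using assms unfolding ordered_set_partition_def by blast
qed

lemma avoid_iff:
  assumes osp: "ordered_set_partition n As"
  shows "osp_avoids_312 As \<longleftrightarrow>
     (\<forall>h\<in>{1..length As - 1}. inv_ok (pref As ! (h-1)) (pref As ! h))"
proof -
  let ?k = "length As"
  have key: "inv_ok (pref As ! (h-1)) (pref As ! h) \<longleftrightarrow>
     \<not> (\<exists>i l a b c. i < h \<and> h < l \<and> l < ?k \<and> a \<in> As!i \<and> b \<in> As!h \<and> c \<in> As!l \<and> b < c \<and> c < a)"
    if h: "h \<in> {1..?k - 1}" for h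
  proof -
    have hk: "h < ?k" "h - 1 < ?k" "1 \<le> h" using h by auto
    have P1: "x \<in> pref As ! (h-1) \<longleftrightarrow> (\<exists>i<h. x \<in> As!i)" for x
    proof -
      have e: "\<And>i. i \<le> h-1 \<longleftrightarrow> i < h" using hk(3) by arith
      show ?thesis using pref_nth[OF hk(2)] unfolding e by simp
    qed
    have P2: "x \<in> pref As ! h \<longleftrightarrow> (\<exists>i\<le>h. x \<in> As!i)" for x
      using pref_nth[OF hk(1)] by auto
    have D: "x \<in> pref As ! h - pref As ! (h-1) \<longleftrightarrow> x \<in> As!h" for x
    proof
      assume "x \<in> pref As ! h - pref As ! (h-1)"
      then obtain i where "i \<le> h" "x \<in> As!i" "\<not>(\<exists>i<h. x \<in> As!i)" using P1 P2 by blast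
      thus "x \<in> As!h" using le_neq_implies_less by blast
    next
      assume x: "x \<in> As!h"
      have "\<not>(\<exists>i<h. x \<in> As!i)"
      proof
        assume "\<exists>i<h. x \<in> As!i"
        then obtain i where "i < h" "x \<in> As!i" by blast
        thus False using osp_uniq[OF osp _ hk(1) _ x, of i] hk(1) by simp
      qed
      thus "x \<in> pref As ! h - pref As ! (h-1)" using P1 P2 x by blast
    qed
    show ?thesis
    proof
      assume io: "inv_ok (pref As ! (h-1)) (pref As ! h)"
      show "\<not> (\<exists>i l a b c. i < h \<and> h < l \<and> l < ?k \<and> a \<in> As!i \<and> b \<in> As!h \<and> c \<in> As!l \<and> b < c \<and> c < a)"
      proof
        assume "\<exists>i l a b c. i < h \<and> h < l \<and> l < ?k \<and> a \<in> As!i \<and> b \<in> As!h \<and> c \<in> As!l \<and> b < c \<and> c < a"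
        then obtain i l a b c where w: "i < h" "h < l" "l < ?k" "a \<in> As!i" "b \<in> As!h" "c \<in> As!l" "b < c" "c < a" by blast
        have "b \<in> pref As ! h - pref As ! (h-1)" using D w by blast
        moreover have "a \<in> pref As ! (h-1)" using P1 w by blast
        ultimately have "{b..a} \<subseteq> pref As ! h" using io w unfolding inv_ok_def by auto
        hence "c \<in> pref As ! h" using w by auto
        then obtain i' where "i' \<le> h" "c \<in> As!i'" using P2 by blast
        hence "i' = l" using osp_uniq[OF osp _ w(3) _ w(6)] hk by auto
        thus False using \<open>i' \<le> h\<close> w by simp
      qed
    next
      assume na: "\<not> (\<exists>i l a b c. i < h \<and> h < l \<and> l < ?k \<and> a \<in> As!i \<and> b \<in> As!h \<and> c \<in> As!l \<and> b < c \<and> c < a)"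
      show "inv_ok (pref As ! (h-1)) (pref As ! h)" unfolding inv_ok_def
      proof (intro ballI impI subsetI)
        fix y x z assume y: "y \<in> pref As ! h - pref As ! (h-1)" and x: "x \<in> pref As ! (h-1)" and yx: "y < x"
          and z: "z \<in> {y..x}"
        have yh: "y \<in> As!h" using D y by blast
        obtain i where i: "i < h" "x \<in> As!i" using P1 x by blast
        have "x \<in> {1..n}" using osp_sub[OF osp _ i(2)] i hk by simp
        moreover have "y \<in> {1..n}" using osp_sub[OF osp hk(1) yh] .
        ultimately have "z \<in> {1..n}" using z by auto
        then obtain l where l: "l < ?k" "z \<in> As!l" using osp_mem[OF osp] by blast
        show "z \<in> pref As ! h"
        proof (cases "l \<le> h")
          case True thus ?thesis using P2 l by blast
        next
          case False
          have "z \<noteq> y" using osp_uniq[OF osp l(1) hk(1) l(2)] yh False by auto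
          moreover have "z \<noteq> x"
          proof
            assume "z = x"
            hence "l = i" using osp_uniq[OF osp l(1) _ l(2), of i] i hk by simp
            thus False using False i by simp
          qed
          ultimately have "y < z" "z < x" using z by auto
          hence "i < h \<and> h < l \<and> l < ?k \<and> x \<in> As!i \<and> y \<in> As!h \<and> z \<in> As!l \<and> y < z \<and> z < x"
            using i yh l False by auto
          hence False using na by blast
          thus ?thesis ..
        qed
      qed
    qed
  qed
  show ?thesis
  proof
    assume av: "osp_avoids_312 As"
    show "\<forall>h\<in>{1..?k - 1}. inv_ok (pref As ! (h-1)) (pref As ! h)"
    proof
      fix h assume h: "h \<in> {1..?k - 1}"
      show "inv_ok (pref As ! (h-1)) (pref As ! h)" unfolding key[OF h]
      proof
        assume "\<exists>i l a b c. i < h \<and> h < l \<and> l < ?k \<and> a \<in> As!i \<and> b \<in> As!h \<and> c \<in> As!l \<and> b < c \<and> c < a"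
        then obtain i l a b c where "i < h \<and> h < l \<and> l < ?k \<and> a \<in> As!i \<and> b \<in> As!h \<and> c \<in> As!l \<and> b < c \<and> c < a" by blast
        thus False using av unfolding osp_avoids_312_def by blast
      qed
    qed
  next
    assume all: "\<forall>h\<in>{1..?k - 1}. inv_ok (pref As ! (h-1)) (pref As ! h)"
    show "osp_avoids_312 As" unfolding osp_avoids_312_def
    proof
      assume "\<exists>i j l a b c. i < j \<and> j < l \<and> l < ?k \<and> a \<in> As ! i \<and> b \<in> As ! j \<and> c \<in> As ! l \<and> b < c \<and> c < a"
      then obtain i j l a b c where w: "i < j" "j < l" "l < ?k" "a \<in> As ! i" "b \<in> As ! j" "c \<in> As ! l" "b < c" "c < a" by blast
      have "j \<in> {1..?k-1}" using w by auto
      thus False using key[of j] all w by blast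
    qed
  qed
qed


lemma pref_0: "0 < length As \<Longrightarrow> pref As ! 0 = As ! 0"
  using pref_nth[of 0 As] by simp

lemma pref_prev: assumes "1 \<le> h" "h < length As"
  shows "x \<in> pref As ! (h-1) \<longleftrightarrow> (\<exists>i<h. x \<in> As!i)"
proof -
  have e: "\<And>i. i \<le> h-1 \<longleftrightarrow> i < h" using assms(1) by arith
  show ?thesis using pref_nth[of "h-1" As] assms unfolding e by simp
qed

lemma pref_diff: assumes osp: "ordered_set_partition n As" and h: "1 \<le> h" "h < length As"
  shows "pref As ! h - pref As ! (h-1) = As ! h"
proof (intro equalityI subsetI)
  fix x assume "x \<in> pref As ! h - pref As ! (h-1)"
  then obtain i where "i \<le> h" "x \<in> As!i" "\<not>(\<exists>i<h. x \<in> As!i)" using pref_prev[OF h] pref_nth[OF h(2)] by blast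
  thus "x \<in> As!h" using le_neq_implies_less by blast
next
  fix x assume x: "x \<in> As!h"
  have "\<not>(\<exists>i<h. x \<in> As!i)"
  proof
    assume "\<exists>i<h. x \<in> As!i"
    then obtain i where "i < h" "x \<in> As!i" by blast
    thus False using osp_uniq[OF osp _ h(2) _ x, of i] h(2) by simp
  qed
  thus "x \<in> pref As ! h - pref As ! (h-1)" using pref_prev[OF h] pref_nth[OF h(2)] x by blast
qed

lemma pref_sub: assumes osp: "ordered_set_partition n As" "h < length As"
  shows "pref As ! h \<subseteq> {1..n}"
proof
  fix x assume "x \<in> pref As ! h"
  then obtain i where "i \<le> h" "x \<in> As!i" using pref_nth[OF assms(2)] by blast
  thus "x \<in> {1..n}" using osp_sub[OF osp(1), of i x] assms(2) by simp
qed

lemma osp_chain: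
  assumes osp: "ordered_set_partition n As" and av: "osp_avoids_312 As"
  shows "rcd_chain n (pref As)"
proof -
  let ?k = "length As"
  have k: "1 \<le> ?k" and ne: "\<And>i. i < ?k \<Longrightarrow> As!i \<noteq> {}" using osp unfolding ordered_set_partition_def by auto
  have step: "pref As ! i \<subset> pref As ! (i+1)" if i1: "i + 1 < ?k" for i
  proof -
    have sub: "pref As ! i \<subseteq> pref As ! (i+1)" using pref_nth[of i As] pref_nth[of "i+1" As] i1 by auto
    obtain x where x: "x \<in> As!(i+1)" using ne[OF i1] by blast
    have "x \<in> pref As ! (i+1) - pref As ! i" using pref_diff[OF osp, of "i+1"] i1 x by simp
    thus ?thesis using sub by blast
  qed
  have last: "last (pref As) = {1..n}"
  proof -
    have "As \<noteq> []" using k by (cases As) auto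
    hence "pref As \<noteq> []" by (metis length_pref length_0_conv)
    hence "last (pref As) = pref As ! (?k - 1)" by (simp add: last_conv_nth)
    also have "\<dots> = {x. \<exists>i\<le>?k-1. x \<in> As!i}" using pref_nth[of "?k-1" As] k by simp
    also have "\<dots> = {1..n}"
    proof (intro equalityI subsetI)
      fix x assume "x \<in> {x. \<exists>i\<le>?k-1. x \<in> As!i}"
      then obtain i where "i \<le> ?k - 1" "x \<in> As!i" by blast
      thus "x \<in> {1..n}" using osp_sub[OF osp, of i] k by simp
    next
      fix x assume "x \<in> {1..n}"
      then obtain i where "i < ?k" "x \<in> As!i" using osp_mem[OF osp] by blast
      thus "x \<in> {x. \<exists>i\<le>?k-1. x \<in> As!i}" by (intro CollectI exI[of _ i]) simp
    qed
    finally show ?thesis .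
  qed
  have steps: "rightmost_clump_step (pref As ! (h-1)) (pref As ! h)" if h: "h \<in> {1..?k - 1}" for h
  proof -
    have hk: "1 \<le> h" "h < ?k" using h by auto
    have io: "inv_ok (pref As ! (h-1)) (pref As ! h)" using avoid_iff[OF osp] av h by blast
    have fin: "finite (pref As ! h)" using pref_sub[OF osp hk(2)] finite_subset by blast
    have "As!0 \<subseteq> pref As ! (h-1)"
    proof
      fix x assume "x \<in> As!0"
      moreover have "0 < h" using hk by simp
      ultimately show "x \<in> pref As ! (h-1)" using pref_prev[OF hk, of x] by blast
    qed
    moreover have "0 < ?k" using hk by linarith
    hence "As!0 \<noteq> {}" using ne[of 0] by blast
    ultimately have nE: "pref As ! (h-1) \<noteq> {}" by blast
    have "pref As ! (h-1) \<subseteq> pref As ! h" using step[of "h-1"] hk by auto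
    thus ?thesis using rcd_iff[OF fin nE] io by blast
  qed
  show ?thesis unfolding rcd_chain_def
  proof (intro conjI allI impI ballI)
    show "1 \<le> length (pref As)" using k by simp
    have kne: "As \<noteq> []" using k by (cases As) auto
    thus "{} \<subset> pref As ! 0" using pref_0[of As] ne[of 0] by auto
    fix i assume "i + 1 < length (pref As)" thus "pref As ! i \<subset> pref As ! (i+1)" using step by simp
  next
    show "last (pref As) = {1..n}" by (rule last)
  next
    fix h assume "h \<in> {1..length (pref As) - 1}"
    thus "rightmost_clump_step (pref As ! (h - 1)) (pref As ! h)" using steps by simp
  qed
qed

lemma diffs_pref: assumes osp: "ordered_set_partition n As" shows "diffs (pref As) = As"
proof (rule nth_equalityI)
  show "length (diffs (pref As)) = length As" by simp
  fix h assume "h < length (diffs (pref As))"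
  hence h: "h < length As" by simp
  show "diffs (pref As) ! h = As ! h"
  proof (cases "h = 0")
    case True thus ?thesis using diffs_nth[of 0 "pref As"] pref_0[of As] h by simp
  next
    case False thus ?thesis using diffs_nth[of h "pref As"] pref_diff[OF osp, of h] h by simp
  qed
qed

lemma chain_mono: assumes "rcd_chain n Bs" "i \<le> j" "j < length Bs" shows "Bs!i \<subseteq> Bs!j"
  using assms(2,3)
proof (induction j)
  case 0 thus ?case by simp
next
  case (Suc j)
  show ?case
  proof (cases "i = Suc j")
    case True thus ?thesis by simp
  next
    case False
    hence "Bs!i \<subseteq> Bs!j" using Suc by simp
    moreover have "Bs!j \<subset> Bs!(j+1)" using assms(1) Suc.prems unfolding rcd_chain_def by simp
    ultimately show ?thesis by simp
  qed
qed

lemma pref_diffs: assumes ch: "rcd_chain n Bs" shows "pref (diffs Bs) = Bs"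
proof (rule nth_equalityI)
  show "length (pref (diffs Bs)) = length Bs" by simp
  fix h assume "h < length (pref (diffs Bs))"
  hence h: "h < length Bs" by simp
  have "{x. \<exists>i\<le>h. x \<in> diffs Bs ! i} = Bs ! h" using h
  proof (induction h)
    case 0 thus ?case using diffs_nth[of 0 Bs] by simp
  next
    case (Suc h)
    have IH: "{x. \<exists>i\<le>h. x \<in> diffs Bs ! i} = Bs ! h" using Suc by simp
    have d: "diffs Bs ! Suc h = Bs ! Suc h - Bs ! h" using diffs_nth[of "Suc h" Bs] Suc.prems by simp
    have sub: "Bs ! h \<subseteq> Bs ! Suc h" using chain_mono[OF ch, of h "Suc h"] Suc.prems by simp
    have "{x. \<exists>i\<le>Suc h. x \<in> diffs Bs ! i} = {x. \<exists>i\<le>h. x \<in> diffs Bs ! i} \<union> diffs Bs ! Suc h"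
      by (auto simp: le_Suc_eq)
    also have "\<dots> = Bs ! Suc h" using IH d sub by auto
    finally show ?case .
  qed
  thus "pref (diffs Bs) ! h = Bs ! h" using pref_nth[of h "diffs Bs"] h by simp
qed

lemma chain_osp: assumes ch: "rcd_chain n Bs"
  shows "ordered_set_partition n (diffs Bs) \<and> osp_avoids_312 (diffs Bs)"
proof -
  let ?k = "length Bs"
  have k: "1 \<le> ?k" and B0: "{} \<subset> Bs!0" and st: "\<And>i. i + 1 < ?k \<Longrightarrow> Bs!i \<subset> Bs!(i+1)"
    and la: "last Bs = {1..n}"
    and rs: "\<And>h. h \<in> {1..?k-1} \<Longrightarrow> rightmost_clump_step (Bs!(h-1)) (Bs!h)"
    using ch unfolding rcd_chain_def by auto
  have "Bs \<noteq> []" using k by auto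
  hence lastk: "Bs!(?k-1) = {1..n}" using la by (simp add: last_conv_nth)
  have PD: "pref (diffs Bs) = Bs" by (rule pref_diffs[OF ch])
  have osp: "ordered_set_partition n (diffs Bs)" unfolding ordered_set_partition_def
  proof (intro conjI allI impI)
    show "1 \<le> length (diffs Bs)" using k by simp
    fix i assume i: "i < length (diffs Bs)"
    show "diffs Bs ! i \<noteq> {}"
    proof (cases "i = 0")
      case True
      have "diffs Bs ! 0 = Bs ! 0" using diffs_nth[of 0 Bs] i True by simp
      thus ?thesis using True B0 by auto
    next
      case False
      hence "Bs!(i-1) \<subset> Bs!i" using st[of "i-1"] i by simp
      thus ?thesis using diffs_nth[of i Bs] False i by auto
    qed
  next
    fix i j assume ij: "i < j \<and> j < length (diffs Bs)"
    have "diffs Bs ! i \<subseteq> Bs ! (j-1)"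
    proof -
      have "diffs Bs ! i \<subseteq> Bs ! i" using diffs_nth[of i Bs] ij by auto
      also have "\<dots> \<subseteq> Bs ! (j-1)"
      proof -
        have "i \<le> j-1" "j-1 < length Bs" using ij by auto
        thus ?thesis using chain_mono[OF ch, of i "j-1"] by blast
      qed
      finally show ?thesis .
    qed
    moreover have "diffs Bs ! j \<inter> Bs ! (j-1) = {}" using diffs_nth[of j Bs] ij by auto
    ultimately show "diffs Bs ! i \<inter> diffs Bs ! j = {}" by blast
  next
    have "\<Union>(set (diffs Bs)) = {x. \<exists>i\<le>?k-1. x \<in> diffs Bs ! i}"
    proof (intro equalityI subsetI)
      fix x assume "x \<in> \<Union>(set (diffs Bs))"
      then obtain i where "i < ?k" "x \<in> diffs Bs ! i" by (auto simp: in_set_conv_nth)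
      thus "x \<in> {x. \<exists>i\<le>?k-1. x \<in> diffs Bs ! i}" by (intro CollectI exI[of _ i]) simp
    next
      fix x assume "x \<in> {x. \<exists>i\<le>?k-1. x \<in> diffs Bs ! i}"
      then obtain i where "i \<le> ?k-1" "x \<in> diffs Bs ! i" by blast
      moreover have "diffs Bs ! i \<in> set (diffs Bs)" using \<open>i \<le> ?k-1\<close> k by (intro nth_mem) simp
      ultimately show "x \<in> \<Union>(set (diffs Bs))" by blast
    qed
    also have "\<dots> = pref (diffs Bs) ! (?k-1)" using pref_nth[of "?k-1" "diffs Bs"] k by simp
    also have "\<dots> = {1..n}" using PD lastk by simp
    finally show "\<Union>(set (diffs Bs)) = {1..n}" .
  qed
  have "\<forall>h\<in>{1..?k - 1}. inv_ok (Bs ! (h-1)) (Bs ! h)"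
  proof
    fix h assume h: "h \<in> {1..?k - 1}"
    have "h \<le> ?k-1" "?k-1 < ?k" using h k by auto
    hence "Bs!h \<subseteq> Bs!(?k-1)" using chain_mono[OF ch, of h "?k-1"] by blast
    hence fin: "finite (Bs!h)" using lastk finite_subset by auto
    have "h-1 < ?k" using h by auto
    hence "Bs!0 \<subseteq> Bs!(h-1)" using chain_mono[OF ch, of 0 "h-1"] by blast
    hence nE: "Bs!(h-1) \<noteq> {}" using B0 by auto
    have "h < ?k" using h by auto
    hence "Bs!(h-1) \<subseteq> Bs!h" using chain_mono[OF ch, of "h-1" h] by simp
    thus "inv_ok (Bs ! (h-1)) (Bs ! h)" using rcd_iff[OF fin nE] rs[OF h] by blast
  qed
  hence "osp_avoids_312 (diffs Bs)" using avoid_iff[OF osp] PD by simp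
  thus ?thesis using osp by simp
qed

lemma card_osp_chain:
  "card {As. ordered_set_partition n As \<and> osp_avoids_312 As} = card {Bs. rcd_chain n Bs}"
proof (rule bij_betw_same_card[of pref])
  show "bij_betw pref {As. ordered_set_partition n As \<and> osp_avoids_312 As} {Bs. rcd_chain n Bs}"
  proof (rule bij_betw_byWitness[where f' = diffs])
    show "\<forall>a\<in>{As. ordered_set_partition n As \<and> osp_avoids_312 As}. diffs (pref a) = a"
      using diffs_pref by blast
    show "\<forall>a'\<in>{Bs. rcd_chain n Bs}. pref (diffs a') = a'" using pref_diffs by blast
    show "pref ` {As. ordered_set_partition n As \<and> osp_avoids_312 As} \<subseteq> {Bs. rcd_chain n Bs}"
      using osp_chain by blast
    show "diffs ` {Bs. rcd_chain n Bs} \<subseteq> {As. ordered_set_partition n As \<and> osp_avoids_312 As}"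
      using chain_osp by blast
  qed
qed


lemma cond_iff:
  assumes "finite C'" "C \<noteq> {}" "C \<subseteq> C'"
  shows "(C' - C \<noteq> {} \<longrightarrow> Min (C' - C) \<le> Max C \<longrightarrow> {Min (C' - C)..Max C} \<subseteq> C') \<longleftrightarrow> inv_ok C C'"
proof -
  have fC: "finite C" using assms finite_subset by blast
  have fD: "finite (C' - C)" using assms by simp
  show ?thesis
  proof
    assume H: "C' - C \<noteq> {} \<longrightarrow> Min (C' - C) \<le> Max C \<longrightarrow> {Min (C' - C)..Max C} \<subseteq> C'"
    show "inv_ok C C'" unfolding inv_ok_def
    proof (intro ballI impI)
      fix y x assume y: "y \<in> C' - C" and x: "x \<in> C" and yx: "y < x"
      have "Min (C' - C) \<le> y" using fD y by simp
      moreover have "x \<le> Max C" using fC x by simp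
      ultimately have "{Min (C' - C)..Max C} \<subseteq> C'" using H y yx by auto
      thus "{y..x} \<subseteq> C'" using \<open>Min (C' - C) \<le> y\<close> \<open>x \<le> Max C\<close> by auto
    qed
  next
    assume io: "inv_ok C C'"
    show "C' - C \<noteq> {} \<longrightarrow> Min (C' - C) \<le> Max C \<longrightarrow> {Min (C' - C)..Max C} \<subseteq> C'"
    proof (intro impI)
      assume ne: "C' - C \<noteq> {}" and le: "Min (C' - C) \<le> Max C"
      have m1: "Min (C' - C) \<in> C' - C" using Min_in[OF fD ne] .
      have m2: "Max C \<in> C" using fC assms(2) by simp
      have "Min (C' - C) \<noteq> Max C" using m1 m2 by auto
      hence "Min (C' - C) < Max C" using le by simp
      thus "{Min (C' - C)..Max C} \<subseteq> C'" using io m1 m2 unfolding inv_ok_def by blast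
    qed
  qed
qed

lemma col_len_anti: "j \<le> j' \<Longrightarrow> col_len n lam j' \<le> col_len n lam j"
  unfolding col_len_def by (rule card_mono) auto

lemma col_len_pos: assumes "1 \<le> n" "j \<le> lam ! 0" shows "1 \<le> col_len n lam j"
proof -
  have "1 \<in> {i\<in>{1..n}. lam ! (i - 1) \<ge> j}" using assms by simp
  hence "{i\<in>{1..n}. lam ! (i - 1) \<ge> j} \<noteq> {}" by blast
  thus ?thesis unfolding col_len_def by (simp add: Suc_leI card_gt_0_iff)
qed

locale keyT =
  fixes n lam T
  assumes n1: "1 \<le> n" and dsc: "distinct_short_cols n lam" and key: "is_key n lam T"
begin

definition m where "m = length T"
definition c where "c j = col_len n lam (j+1)"

lemma tab: "is_tableau n lam T" using key unfolding is_key_def by simp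
lemma m_lam: "lam ! 0 = m" using tab unfolding is_tableau_def m_def by simp
lemma len: "j < m \<Longrightarrow> length (T!j) = c j" using tab unfolding is_tableau_def m_def c_def by simp
lemma srt: "j < m \<Longrightarrow> sorted_wrt (<) (T!j)" using tab unfolding is_tableau_def m_def by simp
lemma rng: "j < m \<Longrightarrow> set (T!j) \<subseteq> {1..n}" using tab unfolding is_tableau_def m_def by simp
lemma nest: "j + 1 < m \<Longrightarrow> set (T!(j+1)) \<subseteq> set (T!j)" using key unfolding is_key_def m_def by simp
lemma c_pos: "j < m \<Longrightarrow> 1 \<le> c j" unfolding c_def using col_len_pos[OF n1, of "j+1" lam] m_lam by simp
lemma c_lt: "j < m \<Longrightarrow> c j < n" unfolding c_def using dsc m_lam unfolding distinct_short_cols_def by simp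
lemma c_strict: assumes "j < j'" "j' < m" shows "c j' < c j"
proof -
  have "c j' \<le> c j" unfolding c_def using col_len_anti assms by simp
  moreover have "c j' \<noteq> c j"
  proof
    assume "c j' = c j"
    hence "col_len n lam (j'+1) = col_len n lam (j+1)" unfolding c_def by simp
    moreover have "j'+1 \<in> {1..lam!0}" "j+1 \<in> {1..lam!0}" using assms m_lam by auto
    ultimately have "j'+1 = j+1" using dsc unfolding distinct_short_cols_def inj_on_def by blast
    thus False using assms by simp
  qed
  ultimately show ?thesis by simp
qed
lemma c_le_iff: assumes "j < m" "j' < m" shows "c j' \<le> c j \<longleftrightarrow> j \<le> j'"
  using c_strict assms by (metis le_less not_less)

lemma card_col: "j < m \<Longrightarrow> card (set (T!j)) = c j"
  using srt len by (metis distinct_card strict_sorted_iff)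

lemma col_ne: "j < m \<Longrightarrow> set (T!j) \<noteq> {}"
  using card_col c_pos by fastforce

lemma short_eq: "short_col_lens n lam = c ` {..<m}"
proof (intro equalityI subsetI)
  fix q assume "q \<in> short_col_lens n lam"
  then obtain j where j: "j \<in> {1..lam!0}" "col_len n lam j = q" unfolding short_col_lens_def by blast
  hence "q = c (j-1)" "j - 1 < m" using m_lam unfolding c_def by auto
  thus "q \<in> c ` {..<m}" by blast
next
  fix q assume "q \<in> c ` {..<m}"
  then obtain j where j: "j < m" "q = c j" by blast
  hence "j+1 \<in> {1..lam!0}" "col_len n lam (j+1) = q" "q < n" using m_lam c_lt unfolding c_def by auto
  thus "q \<in> short_col_lens n lam" unfolding short_col_lens_def by blast
qed

lemma cols_eq: assumes "j < m" shows "cols_of_len n lam T (c j) = {T!j}"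
proof (intro equalityI subsetI)
  fix x assume "x \<in> cols_of_len n lam T (c j)"
  then obtain i where i: "x = T!(i-1)" "i \<in> {1..lam!0}" "col_len n lam i = c j" unfolding cols_of_len_def by blast
  hence "c (i-1) = c j" "i - 1 < m" using m_lam unfolding c_def by auto
  hence "i - 1 = j" using c_le_iff assms by (metis le_antisym order_refl)
  thus "x \<in> {T!j}" using i by simp
next
  fix x assume "x \<in> {T!j}"
  hence "x = T!((j+1)-1)" "j+1 \<in> {1..lam!0}" "col_len n lam (j+1) = c j" using assms m_lam unfolding c_def by auto
  thus "x \<in> cols_of_len n lam T (c j)" unfolding cols_of_len_def by blast
qed

lemma vals_eq: "j < m \<Longrightarrow> vals_of_len n lam T (c j) = set (T!j)"
  unfolding vals_of_len_def using cols_eq by simp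

lemma gapless_iff: "gapless_key n lam T \<longleftrightarrow> (\<forall>j. j + 1 < m \<longrightarrow> inv_ok (set (T!(j+1))) (set (T!j)))"
proof -
  have ci: "(let D = vals_of_len n lam T (c j) - vals_of_len n lam T (c (j+1));
             mm = Max (vals_of_len n lam T (c (j+1))) in
         D \<noteq> {} \<longrightarrow> Min D \<le> mm \<longrightarrow>
         (\<forall>cc\<in>cols_of_len n lam T (c j). {Min D..mm} \<subseteq> set cc))
       \<longleftrightarrow> inv_ok (set (T!(j+1))) (set (T!j))" if j: "j + 1 < m" for j
  proof -
    have "(let D = vals_of_len n lam T (c j) - vals_of_len n lam T (c (j+1));
             mm = Max (vals_of_len n lam T (c (j+1))) in
         D \<noteq> {} \<longrightarrow> Min D \<le> mm \<longrightarrow>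
         (\<forall>cc\<in>cols_of_len n lam T (c j). {Min D..mm} \<subseteq> set cc))
      \<longleftrightarrow> (set (T!j) - set (T!(j+1)) \<noteq> {} \<longrightarrow> Min (set (T!j) - set (T!(j+1))) \<le> Max (set (T!(j+1))) \<longrightarrow>
           {Min (set (T!j) - set (T!(j+1)))..Max (set (T!(j+1)))} \<subseteq> set (T!j))"
      using vals_eq[of j] vals_eq[of "j+1"] cols_eq[of j] j by (simp add: Let_def)
    also have "\<dots> \<longleftrightarrow> inv_ok (set (T!(j+1))) (set (T!j))"
      by (rule cond_iff) (use nest[OF j] col_ne[of "j+1"] j in auto)
    finally show ?thesis .
  qed
  show ?thesis
  proof
    assume g: "gapless_key n lam T"
    show "\<forall>j. j + 1 < m \<longrightarrow> inv_ok (set (T!(j+1))) (set (T!j))"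
    proof (intro allI impI)
      fix j assume j: "j + 1 < m"
      have q1: "c (j+1) \<in> short_col_lens n lam" "c j \<in> short_col_lens n lam" using short_eq j by auto
      have lt: "c (j+1) < c j" using c_strict j by simp
      have nb: "\<not> (\<exists>q''\<in>short_col_lens n lam. c (j+1) < q'' \<and> q'' < c j)"
      proof
        assume "\<exists>q''\<in>short_col_lens n lam. c (j+1) < q'' \<and> q'' < c j"
        then obtain l where l: "l < m" "c (j+1) < c l" "c l < c j" using short_eq by auto
        have "l < j + 1" using l(2) c_le_iff[of "j+1" l] l(1) j by linarith
        moreover have "j < l" using l(3) c_le_iff[of l j] l(1) j by linarith
        ultimately show False by simp
      qed
      have "let D = vals_of_len n lam T (c j) - vals_of_len n lam T (c (j+1));
             mm = Max (vals_of_len n lam T (c (j+1))) in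
         D \<noteq> {} \<longrightarrow> Min D \<le> mm \<longrightarrow>
         (\<forall>cc\<in>cols_of_len n lam T (c j). {Min D..mm} \<subseteq> set cc)"
        using g q1 lt nb unfolding gapless_key_def by blast
      thus "inv_ok (set (T!(j+1))) (set (T!j))" using ci[OF j] by blast
    qed
  next
    assume A: "\<forall>j. j + 1 < m \<longrightarrow> inv_ok (set (T!(j+1))) (set (T!j))"
    show "gapless_key n lam T" unfolding gapless_key_def
    proof (intro conjI ballI impI)
      show "is_key n lam T" by (rule key)
      fix q q' assume q: "q \<in> short_col_lens n lam" and q': "q' \<in> short_col_lens n lam"
        and H: "q < q' \<and> \<not> (\<exists>q''\<in>short_col_lens n lam. q < q'' \<and> q'' < q')"
      obtain a where a: "a < m" "q = c a" using q short_eq by auto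
      obtain b where b: "b < m" "q' = c b" using q' short_eq by auto
      have "\<not> c b \<le> c a" using H a b by simp
      hence "b < a" using c_le_iff[of a b] a b by simp
      have "a = b + 1"
      proof (rule ccontr)
        assume "a \<noteq> b + 1"
        hence "b + 1 < a" using \<open>b < a\<close> by simp
        hence "c a < c (b+1)" "c (b+1) < c b" using c_strict a b by auto
        moreover have "c (b+1) \<in> short_col_lens n lam" using short_eq \<open>b+1 < a\<close> a by auto
        ultimately show False using H a b by blast
      qed
      have j: "b + 1 < m" using \<open>a = b+1\<close> a by simp
      show "let D = vals_of_len n lam T q' - vals_of_len n lam T q;
             mm = Max (vals_of_len n lam T q) in
         D \<noteq> {} \<longrightarrow> Min D \<le> mm \<longrightarrow>
         (\<forall>cc\<in>cols_of_len n lam T q'. {Min D..mm} \<subseteq> set cc)"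
        using ci[OF j] A j a b \<open>a = b+1\<close> by simp
    qed
  qed
qed

end


lemma sorted_list_set_id: "sorted_wrt (<) xs \<Longrightarrow> sorted_list_of_set (set xs) = xs"
  by (simp add: sorted_list_of_set_sort_remdups strict_sorted_iff distinct_remdups_id sorted_sort_id)

definition Psi :: "nat \<Rightarrow> nat list list \<Rightarrow> nat set list" where
  "Psi n T = rev (map set T) @ [{1..n}]"

definition Phi :: "nat set list \<Rightarrow> nat list list" where
  "Phi Bs = map sorted_list_of_set (rev (butlast Bs))"

lemma Psi_len: "length (Psi n T) = length T + 1" by (simp add: Psi_def)
lemma Psi_nth: "i < length T \<Longrightarrow> Psi n T ! i = set (T ! (length T - Suc i))"
  by (simp add: Psi_def nth_append rev_nth)
lemma Psi_last_nth: "Psi n T ! length T = {1..n}"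
  by (simp add: Psi_def nth_append)

context keyT begin

lemma Phi_Psi: "Phi (Psi n T) = T"
proof -
  have "Phi (Psi n T) = map sorted_list_of_set (map set T)" by (simp add: Phi_def Psi_def)
  also have "\<dots> = T"
  proof (rule nth_equalityI)
    fix j assume "j < length (map sorted_list_of_set (map set T))"
    hence "j < m" by (simp add: m_def)
    thus "map sorted_list_of_set (map set T) ! j = T ! j" using sorted_list_set_id[OF srt] by (simp add: m_def)
  qed simp
  finally show ?thesis .
qed

lemma Psi_chain: assumes g: "gapless_key n lam T" shows "rcd_chain n (Psi n T)"
proof -
  have io: "\<And>j. j + 1 < m \<Longrightarrow> inv_ok (set (T!(j+1))) (set (T!j))" using gapless_iff g by blast
  let ?B = "Psi n T"
  have Bi: "\<And>i. i < m \<Longrightarrow> ?B ! i = set (T ! (m - Suc i))" using Psi_nth unfolding m_def by simp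
  have Bm: "?B ! m = {1..n}" using Psi_last_nth unfolding m_def by simp
  have lenB: "length ?B = m + 1" using Psi_len unfolding m_def by simp
  have Bsub: "\<And>i. i \<le> m \<Longrightarrow> ?B ! i \<subseteq> {1..n}"
  proof -
    fix i assume "i \<le> m"
    show "?B ! i \<subseteq> {1..n}"
    proof (cases "i = m")
      case True thus ?thesis using Bm by simp
    next
      case False thus ?thesis using Bi[of i] rng[of "m - Suc i"] \<open>i \<le> m\<close> by simp
    qed
  qed
  have st: "?B ! i \<subset> ?B ! (i+1)" if i: "i + 1 < m + 1" for i
  proof (cases "i + 1 = m")
    case True
    have "?B ! i = set (T!0)" using Bi[of i] True by simp
    moreover have "set (T!0) \<subseteq> {1..n}" using rng[of 0] True by simp
    moreover have "card (set (T!0)) < card {1..n}" using card_col[of 0] c_lt[of 0] True by simp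
    ultimately show ?thesis using Bm True by auto
  next
    case False
    define j where "j = m - Suc (i+1)"
    have j: "j + 1 < m" "?B ! i = set (T!(j+1))" "?B ! (i+1) = set (T!j)"
      using Bi[of i] Bi[of "i+1"] i False unfolding j_def by (auto simp: Suc_diff_Suc)
    have "set (T!(j+1)) \<subseteq> set (T!j)" using nest j(1) by simp
    moreover have "card (set (T!(j+1))) < card (set (T!j))" using card_col c_strict j(1) by simp
    ultimately show ?thesis using j by auto
  qed
  show ?thesis unfolding rcd_chain_def
  proof (intro conjI allI impI ballI)
    show "1 \<le> length ?B" using lenB by simp
    show "{} \<subset> ?B ! 0"
    proof (cases "m = 0")
      case True thus ?thesis using Bm n1 by auto
    next
      case False thus ?thesis using Bi[of 0] col_ne[of "m - 1"] by auto
    qed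
    fix i assume "i + 1 < length ?B" thus "?B ! i \<subset> ?B ! (i+1)" using st lenB by simp
  next
    have "?B \<noteq> []" using lenB by auto
    thus "last ?B = {1..n}" using Bm lenB by (simp add: last_conv_nth)
  next
    fix h assume h: "h \<in> {1..length ?B - 1}"
    hence h1: "1 \<le> h" "h \<le> m" using lenB by auto
    have fin: "finite (?B ! h)" using Bsub[OF h1(2)] finite_subset by blast
    have sub: "?B ! (h-1) \<subseteq> ?B ! h" using st[of "h-1"] h1 by auto
    have ne: "?B ! (h-1) \<noteq> {}"
    proof -
      have "m - Suc (h-1) < m" using h1 by simp
      thus ?thesis using Bi[of "h-1"] col_ne h1 by auto
    qed
    have "inv_ok (?B ! (h-1)) (?B ! h)"
    proof (cases "h = m")
      case True
      show ?thesis unfolding inv_ok_def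
      proof (intro ballI impI subsetI)
        fix y x z assume "y \<in> ?B ! h - ?B ! (h-1)" "x \<in> ?B ! (h-1)" "z \<in> {y..x}"
        moreover have "?B ! (h-1) \<subseteq> {1..n}" using Bsub h1 by simp
        ultimately show "z \<in> ?B ! h" using True Bm by auto
      qed
    next
      case False
      define j where "j = m - Suc h"
      have j: "j + 1 < m" "?B ! (h-1) = set (T!(j+1))" "?B ! h = set (T!j)"
        using Bi[of h] Bi[of "h-1"] h1 False unfolding j_def by (auto simp: Suc_diff_Suc)
      thus ?thesis using io by simp
    qed
    thus "rightmost_clump_step (?B ! (h-1)) (?B ! h)" using rcd_iff[OF fin ne sub] by blast
  qed
qed

end


lemma card_ge_iff:
  assumes dec: "\<And>j j'. j < j' \<Longrightarrow> j' < m \<Longrightarrow> ls j' < (ls j::nat)" and c: "1 \<le> c" "c \<le> m"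
  shows "c \<le> card {j. j < m \<and> i \<le> ls j} \<longleftrightarrow> i \<le> ls (c-1)"
proof
  assume H: "c \<le> card {j. j < m \<and> i \<le> ls j}"
  show "i \<le> ls (c-1)"
  proof (rule ccontr)
    assume "\<not> i \<le> ls (c-1)"
    have "{j. j < m \<and> i \<le> ls j} \<subseteq> {..<c-1}"
    proof
      fix j assume j: "j \<in> {j. j < m \<and> i \<le> ls j}"
      show "j \<in> {..<c-1}"
      proof (rule ccontr)
        assume "j \<notin> {..<c-1}"
        hence "c - 1 \<le> j" by simp
        have "ls j \<le> ls (c-1)"
        proof (cases "c - 1 = j")
          case True thus ?thesis by simp
        next
          case False
          hence "c - 1 < j" using \<open>c - 1 \<le> j\<close> by simp
          thus ?thesis using dec[of "c-1" j] j by simp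
        qed
        thus False using j \<open>\<not> i \<le> ls (c-1)\<close> by simp
      qed
    qed
    hence "card {j. j < m \<and> i \<le> ls j} \<le> c - 1" using card_mono[of "{..<c-1}"] by fastforce
    thus False using H c by simp
  qed
next
  assume H: "i \<le> ls (c-1)"
  have "{..<c} \<subseteq> {j. j < m \<and> i \<le> ls j}"
  proof
    fix j assume "j \<in> {..<c}"
    hence "j \<le> c - 1" "j < m" using c by auto
    have "ls (c-1) \<le> ls j"
    proof (cases "j = c-1")
      case True thus ?thesis by simp
    next
      case False
      hence "j < c-1" using \<open>j \<le> c - 1\<close> by simp
      moreover have "c-1 < m" using c by simp
      ultimately show ?thesis using dec[of j "c-1"] by simp
    qed
    thus "j \<in> {j. j < m \<and> i \<le> ls j}" using H \<open>j < m\<close> by simp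
  qed
  hence "card {..<c} \<le> card {j. j < m \<and> i \<le> ls j}" by (rule card_mono[rotated]) simp
  thus "c \<le> card {j. j < m \<and> i \<le> ls j}" by simp
qed

lemma lam_exists:
  assumes n1: "1 \<le> n" and rng: "\<And>j. j < m \<Longrightarrow> 1 \<le> ls j \<and> ls j < n"
    and dec: "\<And>j j'. j < j' \<Longrightarrow> j' < m \<Longrightarrow> ls j' < (ls j::nat)"
  shows "\<exists>lam. is_partition n lam \<and> lam ! 0 = m \<and> (\<forall>j<m. col_len n lam (j+1) = ls j) \<and> distinct_short_cols n lam"
proof -
  define lam where "lam = map (\<lambda>i. card {j. j < m \<and> i + 1 \<le> ls j}) [0..<n]"
  have ln: "length lam = n" by (simp add: lam_def)
  have li: "\<And>i. i < n \<Longrightarrow> lam ! i = card {j. j < m \<and> i + 1 \<le> ls j}" by (simp add: lam_def)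
  have part: "is_partition n lam" unfolding is_partition_def
  proof (intro conjI allI impI)
    show "length lam = n" by (rule ln)
    fix i assume "i + 1 < n"
    thus "lam ! (i + 1) \<le> lam ! i" using li[of i] li[of "i+1"] by (auto intro!: card_mono)
  qed
  have l0: "lam ! 0 = m"
  proof -
    have "{j. j < m \<and> 0 + 1 \<le> ls j} = {..<m}" using rng by auto
    thus ?thesis using li[of 0] n1 by simp
  qed
  have cl: "col_len n lam c = ls (c-1)" if c: "1 \<le> c" "c \<le> m" for c
  proof -
    have "{i\<in>{1..n}. lam ! (i - 1) \<ge> c} = {1..ls (c-1)}"
    proof (intro equalityI subsetI)
      fix i assume "i \<in> {i\<in>{1..n}. lam ! (i - 1) \<ge> c}"
      hence i: "1 \<le> i" "i \<le> n" "c \<le> card {j. j < m \<and> i \<le> ls j}" using li[of "i-1"] by auto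
      thus "i \<in> {1..ls (c-1)}" using card_ge_iff[OF dec c] by auto
    next
      fix i assume i: "i \<in> {1..ls (c-1)}"
      have "ls (c-1) < n" using rng[of "c-1"] c by simp
      hence "1 \<le> i" "i \<le> n" "i - 1 < n" using i by auto
      moreover have "c \<le> card {j. j < m \<and> i \<le> ls j}" using card_ge_iff[OF dec c] i by auto
      ultimately show "i \<in> {i\<in>{1..n}. lam ! (i - 1) \<ge> c}" using li[of "i-1"] by auto
    qed
    thus ?thesis unfolding col_len_def by simp
  qed
  have dsc: "distinct_short_cols n lam" unfolding distinct_short_cols_def l0
  proof (intro conjI ballI)
    show "inj_on (col_len n lam) {1..m}"
    proof (rule inj_onI)
      fix a b assume ab: "a \<in> {1..m}" "b \<in> {1..m}" "col_len n lam a = col_len n lam b"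
      hence e: "ls (a-1) = ls (b-1)" using cl by auto
      have am: "a - 1 < m" "b - 1 < m" using ab by auto
      show "a = b"
      proof (rule ccontr)
        assume "a \<noteq> b"
        hence "a - 1 < b - 1 \<or> b - 1 < a - 1" using ab by auto
        thus False using dec[of "a-1" "b-1"] dec[of "b-1" "a-1"] am e by auto
      qed
    qed
    fix j assume "j \<in> {1..m}"
    thus "col_len n lam j < n" using cl rng[of "j-1"] by auto
  qed
  show ?thesis using part l0 cl dsc by (intro exI[of _ lam]) auto
qed

lemma row_le:
  assumes fA: "finite (A::nat set)" and BA: "B \<subseteq> A" and i: "i < card B"
  shows "sorted_list_of_set A ! i \<le> sorted_list_of_set B ! i"
proof (rule ccontr)
  let ?xs = "sorted_list_of_set A" and ?ys = "sorted_list_of_set B"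
  assume "\<not> ?xs ! i \<le> ?ys ! i"
  hence gt: "?ys ! i < ?xs ! i" by simp
  have fB: "finite B" using fA BA finite_subset by blast
  have lxs: "length ?xs = card A" and lys: "length ?ys = card B" by simp_all
  have sx: "sorted_wrt (<) ?xs" and sy: "sorted_wrt (<) ?ys" by simp_all
  have cBA: "card B \<le> card A" using card_mono[OF fA BA] .
  define b where "b = ?ys ! i"
  have S1: "(\<lambda>p. ?ys ! p) ` {..i} \<subseteq> {a\<in>A. a \<le> b}"
  proof
    fix y assume "y \<in> (\<lambda>p. ?ys ! p) ` {..i}"
    then obtain p where p: "p \<le> i" "y = ?ys ! p" by blast
    have "y \<in> set ?ys" using p i lys by auto
    hence "y \<in> A" using fB BA by auto
    moreover have "y \<le> b"
    proof (cases "p = i")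
      case True thus ?thesis using p unfolding b_def by simp
    next
      case False
      hence "p < i" using p by simp
      have "\<forall>i j. i < j \<longrightarrow> j < length ?ys \<longrightarrow> ?ys ! i < ?ys ! j" using sy by (simp add: sorted_wrt_iff_nth_less)
      hence "?ys ! p < ?ys ! i" using \<open>p < i\<close> i lys by simp
      thus ?thesis using p unfolding b_def by simp
    qed
    ultimately show "y \<in> {a\<in>A. a \<le> b}" by simp
  qed
  have c1: "card ((\<lambda>p. ?ys ! p) ` {..i}) = i + 1"
  proof -
    have "inj_on (\<lambda>p. ?ys ! p) {..i}"
      using distinct_sorted_list_of_set[of B] i lys by (auto simp: inj_on_def nth_eq_iff_index_eq)
    thus ?thesis by (simp add: card_image)
  qed
  have S2: "{a\<in>A. a \<le> b} \<subseteq> (\<lambda>p. ?xs ! p) ` {..<i}"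
  proof
    fix a assume a: "a \<in> {a\<in>A. a \<le> b}"
    hence "a \<in> set ?xs" using fA by simp
    then obtain p where p: "p < length ?xs" "a = ?xs ! p" by (auto simp: in_set_conv_nth)
    have "p < i"
    proof (rule ccontr)
      assume "\<not> p < i"
      have "?xs ! i \<le> ?xs ! p"
      proof (cases "p = i")
        case True thus ?thesis by simp
      next
        case False
        hence "i < p" using \<open>\<not> p < i\<close> by simp
        have "\<forall>i j. i < j \<longrightarrow> j < length ?xs \<longrightarrow> ?xs ! i < ?xs ! j" using sx by (simp add: sorted_wrt_iff_nth_less)
        hence "?xs ! i < ?xs ! p" using \<open>i < p\<close> p by blast
        thus ?thesis by simp
      qed
      moreover have "a \<le> b" using a by simp
      ultimately show False using p(2) gt unfolding b_def by linarith
    qed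
    thus "a \<in> (\<lambda>p. ?xs ! p) ` {..<i}" using p by blast
  qed
  have "i + 1 \<le> card {a\<in>A. a \<le> b}" using card_mono[OF _ S1] c1 fA by simp
  also have "\<dots> \<le> card ((\<lambda>p. ?xs ! p) ` {..<i})" using card_mono[OF _ S2] by simp
  also have "\<dots> \<le> i" using card_image_le[of "{..<i}" "\<lambda>p. ?xs ! p"] by simp
  finally show False by simp
qed


lemma chain_basic:
  assumes ch: "rcd_chain n Bs"
  shows "Bs \<noteq> []" "Bs ! (length Bs - 1) = {1..n}"
    "\<And>i i'. i < i' \<Longrightarrow> i' < length Bs \<Longrightarrow> Bs!i \<subset> Bs!i'"
    "\<And>i. i < length Bs \<Longrightarrow> Bs!i \<subseteq> {1..n}"
    "\<And>i. i < length Bs \<Longrightarrow> Bs!i \<noteq> {}"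
proof -
  have k: "1 \<le> length Bs" and B0: "{} \<subset> Bs!0" and st: "\<And>i. i + 1 < length Bs \<Longrightarrow> Bs!i \<subset> Bs!(i+1)"
    and la: "last Bs = {1..n}" using ch unfolding rcd_chain_def by auto
  show ne: "Bs \<noteq> []" using k by (cases Bs) auto
  show lst: "Bs ! (length Bs - 1) = {1..n}" using la ne by (simp add: last_conv_nth)
  show strict: "\<And>i i'. i < i' \<Longrightarrow> i' < length Bs \<Longrightarrow> Bs!i \<subset> Bs!i'"
  proof -
    fix i i' assume ii: "i < i'" "i' < length Bs"
    have "Bs!i \<subset> Bs!(i+1)" using st ii by simp
    moreover have "Bs!(i+1) \<subseteq> Bs!i'" using chain_mono[OF ch, of "i+1" i'] ii by simp
    ultimately show "Bs!i \<subset> Bs!i'" by blast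
  qed
  show "\<And>i. i < length Bs \<Longrightarrow> Bs!i \<subseteq> {1..n}"
  proof -
    fix i assume "i < length Bs"
    hence "i \<le> length Bs - 1" "length Bs - 1 < length Bs" using ne by auto
    thus "Bs!i \<subseteq> {1..n}" using chain_mono[OF ch, of i "length Bs - 1"] lst by simp
  qed
  show "\<And>i. i < length Bs \<Longrightarrow> Bs!i \<noteq> {}"
  proof -
    fix i assume "i < length Bs"
    thus "Bs!i \<noteq> {}" using chain_mono[OF ch, of 0 i] B0 by auto
  qed
qed

lemma Phi_len: "length (Phi Bs) = length Bs - 1" by (simp add: Phi_def)
lemma Phi_nth: "j < length Bs - 1 \<Longrightarrow> Phi Bs ! j = sorted_list_of_set (Bs ! (length Bs - 1 - Suc j))"
  by (simp add: Phi_def rev_nth nth_butlast)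

lemma Psi_Phi: assumes ch: "rcd_chain n Bs" shows "Psi n (Phi Bs) = Bs"
proof -
  note cb = chain_basic[OF ch]
  have fin: "\<And>X. X \<in> set (butlast Bs) \<Longrightarrow> finite X"
  proof -
    fix X assume "X \<in> set (butlast Bs)"
    then obtain i where "i < length (butlast Bs)" "X = butlast Bs ! i" by (auto simp: in_set_conv_nth)
    hence "X = Bs ! i" "i < length Bs" by (auto simp: nth_butlast)
    thus "finite X" using cb(4) finite_subset by blast
  qed
  have "rev (map set (Phi Bs)) = butlast Bs"
    unfolding Phi_def using fin by (simp add: rev_map[symmetric] map_idI)
  moreover have "last Bs = {1..n}" using ch unfolding rcd_chain_def by simp
  ultimately show ?thesis unfolding Psi_def using cb(1) by (metis append_butlast_last_id)
qed

lemma Phi_key: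
  assumes n1: "1 \<le> n" and ch: "rcd_chain n Bs"
  shows "\<exists>lam. is_partition n lam \<and> distinct_short_cols n lam \<and> gapless_key n lam (Phi Bs)"
proof -
  note cb = chain_basic[OF ch]
  define k where "k = length Bs"
  define M where "M = k - 1"
  define T where "T = Phi Bs"
  have k1: "1 \<le> k" using cb(1) unfolding k_def by (cases Bs) auto
  have lT: "length T = M" unfolding T_def M_def k_def by (simp add: Phi_len)
  have Tj: "\<And>j. j < M \<Longrightarrow> T ! j = sorted_list_of_set (Bs ! (M - Suc j))"
    unfolding T_def M_def k_def by (simp add: Phi_nth)
  have ix: "\<And>j. j < M \<Longrightarrow> M - Suc j < k" unfolding M_def by simp
  have finB: "\<And>i. i < k \<Longrightarrow> finite (Bs!i)" using cb(4) finite_subset unfolding k_def by blast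
  define ls where "ls j = card (Bs ! (M - Suc j))" for j
  have ls_rng: "1 \<le> ls j \<and> ls j < n" if j: "j < M" for j
  proof
    show "1 \<le> ls j" unfolding ls_def using finB[OF ix[OF j]] cb(5)[of "M - Suc j"] ix[OF j] k_def
      by (simp add: Suc_leI card_gt_0_iff)
    have "Bs ! (M - Suc j) \<subset> Bs ! (k - 1)" using cb(3)[of "M - Suc j" "k-1"] j k1 unfolding M_def k_def by simp
    hence "card (Bs ! (M - Suc j)) < card (Bs ! (k - 1))" using finB[of "k-1"] k1 by (intro psubset_card_mono) auto
    thus "ls j < n" unfolding ls_def using cb(2) unfolding k_def by simp
  qed
  have ls_dec: "ls j' < ls j" if jj: "j < j'" "j' < M" for j j'
  proof -
    have "Bs ! (M - Suc j') \<subset> Bs ! (M - Suc j)" using cb(3)[of "M - Suc j'" "M - Suc j"] jj ix[of j] unfolding k_def by simp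
    thus ?thesis unfolding ls_def using finB[OF ix[of j]] jj by (intro psubset_card_mono) auto
  qed
  obtain lam where lam: "is_partition n lam" "lam ! 0 = M" "\<And>j. j < M \<Longrightarrow> col_len n lam (j+1) = ls j"
    "distinct_short_cols n lam"
  proof -
    have "\<exists>lam. is_partition n lam \<and> lam ! 0 = M \<and> (\<forall>j<M. col_len n lam (j+1) = ls j) \<and> distinct_short_cols n lam"
      by (rule lam_exists[OF n1]) (use ls_rng ls_dec in auto)
    thus ?thesis using that by blast
  qed
  have nestB: "Bs ! (M - Suc (j+1)) \<subseteq> Bs ! (M - Suc j)" if j: "j + 1 < M" for j
  proof -
    have "M - Suc (j+1) < M - Suc j" using j by simp
    thus ?thesis using cb(3)[of "M - Suc (j+1)" "M - Suc j"] j ix[of j] unfolding k_def by simp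
  qed
  have tab: "is_tableau n lam T" unfolding is_tableau_def
  proof (intro conjI allI impI)
    show "length T = lam ! 0" using lT lam(2) by simp
    fix j assume j: "j < length T"
    hence jm: "j < M" using lT by simp
    show "length (T ! j) = col_len n lam (j + 1)" using Tj[OF jm] lam(3)[OF jm] unfolding ls_def by simp
    show "set (T ! j) \<subseteq> {1..n}" using Tj[OF jm] finB[OF ix[OF jm]] cb(4)[of "M - Suc j"] ix[OF jm] unfolding k_def by simp
    show "sorted_wrt (<) (T ! j)" using Tj[OF jm] by simp
  next
    fix j i assume ji: "j + 1 < length T \<and> i < length (T ! (j + 1))"
    hence j: "j + 1 < M" using lT by simp
    have "i < card (Bs ! (M - Suc (j+1)))" using ji Tj[OF j] by simp
    thus "T ! j ! i \<le> T ! (j + 1) ! i" using Tj[of j] Tj[OF j] row_le[OF finB[OF ix[of j]] nestB[OF j]] j by simp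
  qed
  have key: "is_key n lam T" unfolding is_key_def
  proof (intro conjI allI impI)
    show "is_tableau n lam T" by (rule tab)
    fix j assume "j + 1 < length T"
    hence j: "j + 1 < M" using lT by simp
    show "set (T ! (j + 1)) \<subseteq> set (T ! j)" using Tj[of j] Tj[OF j] nestB[OF j] finB[OF ix[of j]] finB[OF ix[OF j]] j by simp
  qed
  interpret keyT n lam T using n1 lam(4) key by unfold_locales
  have "gapless_key n lam T" unfolding gapless_iff
  proof (intro allI impI)
    fix j assume j: "j + 1 < keyT.m T"
    hence jm: "j + 1 < M" using lT m_def by simp
    define h where "h = M - Suc j"
    have h: "h \<in> {1..length Bs - 1}" "h - 1 = M - Suc (j+1)" using jm unfolding h_def M_def k_def by auto
    have rs: "rightmost_clump_step (Bs ! (h-1)) (Bs ! h)" using ch h(1) unfolding rcd_chain_def by blast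
    have hk: "h < length Bs" "h - 1 < length Bs" using h(1) by auto
    have fin: "finite (Bs ! h)" using finB[of h] hk unfolding k_def by simp
    have ne: "Bs ! (h-1) \<noteq> {}" using cb(5)[of "h-1"] hk by simp
    have sub: "Bs ! (h-1) \<subseteq> Bs ! h" using nestB[OF jm] h unfolding h_def by simp
    have "inv_ok (Bs ! (h-1)) (Bs ! h)" using rcd_iff[OF fin ne sub] rs by blast
    thus "inv_ok (set (T ! (j + 1))) (set (T ! j))"
      using Tj[of j] Tj[OF jm] h(2) finB[OF ix[of j]] finB[OF ix[OF jm]] jm unfolding h_def by simp
  qed
  thus ?thesis using lam unfolding T_def by blast
qed

lemma card_chain_key:
  assumes n1: "1 \<le> n"
  shows "card {T. \<exists>lam. is_partition n lam \<and> distinct_short_cols n lam \<and> gapless_key n lam T}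
       = card {Bs. rcd_chain n Bs}"
proof (rule bij_betw_same_card[of "Psi n"])
  show "bij_betw (Psi n) {T. \<exists>lam. is_partition n lam \<and> distinct_short_cols n lam \<and> gapless_key n lam T}
      {Bs. rcd_chain n Bs}"
  proof (rule bij_betw_byWitness[where f' = Phi])
    show "\<forall>T\<in>{T. \<exists>lam. is_partition n lam \<and> distinct_short_cols n lam \<and> gapless_key n lam T}. Phi (Psi n T) = T"
    proof
      fix T assume "T \<in> {T. \<exists>lam. is_partition n lam \<and> distinct_short_cols n lam \<and> gapless_key n lam T}"
      then obtain lam where l: "distinct_short_cols n lam" "gapless_key n lam T" by blast
      interpret keyT n lam T using n1 l unfolding gapless_key_def by unfold_locales auto
      show "Phi (Psi n T) = T" by (rule Phi_Psi)
    qed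
    show "\<forall>Bs\<in>{Bs. rcd_chain n Bs}. Psi n (Phi Bs) = Bs" using Psi_Phi by blast
    show "Psi n ` {T. \<exists>lam. is_partition n lam \<and> distinct_short_cols n lam \<and> gapless_key n lam T} \<subseteq> {Bs. rcd_chain n Bs}"
    proof
      fix B assume "B \<in> Psi n ` {T. \<exists>lam. is_partition n lam \<and> distinct_short_cols n lam \<and> gapless_key n lam T}"
      then obtain T lam where B: "B = Psi n T" and l: "distinct_short_cols n lam" "gapless_key n lam T" by blast
      interpret keyT n lam T using n1 l unfolding gapless_key_def by unfold_locales auto
      show "B \<in> {Bs. rcd_chain n Bs}" using Psi_chain[OF l(2)] B by simp
    qed
    show "Phi ` {Bs. rcd_chain n Bs} \<subseteq> {T. \<exists>lam. is_partition n lam \<and> distinct_short_cols n lam \<and> gapless_key n lam T}"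
      using Phi_key[OF n1] by blast
  qed
qed


definition FF :: "nat \<Rightarrow> nat set \<Rightarrow> (nat \<Rightarrow> nat) \<Rightarrow> nat set list" where
  "FF n R \<pi> = map (\<lambda>h. \<pi> ` {qseq n R ! h + 1 .. qseq n R ! (h+1)}) [0..<card R + 1]"

locale RR =
  fixes n :: nat and R :: "nat set"
  assumes n1: "1 \<le> n" and Rsub: "R \<subseteq> {1..n-1}"
begin

abbreviation "q \<equiv> qseq n R"
abbreviation "rc \<equiv> card R"
definition seg where "seg h = {q!h+1 .. q!(h+1)}"

lemma finR: "finite R" using Rsub finite_subset by blast

lemma q_len: "length q = rc + 2"
  using finR by (simp add: qseq_def)

lemma q_sorted: "sorted_wrt (<) q"
proof -
  have "\<forall>x\<in>R. 0 < x \<and> x < n"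
  proof
    fix x assume "x \<in> R"
    hence "x \<in> {1..n-1}" using Rsub by blast
    thus "0 < x \<and> x < n" using n1 by auto
  qed
  thus ?thesis using finR n1 by (auto simp: qseq_def sorted_wrt_append)
qed

lemma q_less: "i < j \<Longrightarrow> j \<le> rc + 1 \<Longrightarrow> q!i < q!j"
  using q_sorted q_len by (auto simp: sorted_wrt_iff_nth_less)

lemma q_le: "i \<le> j \<Longrightarrow> j \<le> rc + 1 \<Longrightarrow> q!i \<le> q!j"
  using q_less by (cases "i = j") (auto simp: le_less)

lemma q0: "q!0 = 0" by (simp add: qseq_def)
lemma q_last: "q!(rc+1) = n" using finR by (simp add: qseq_def nth_append)

lemma seg_sub: "h \<le> rc \<Longrightarrow> seg h \<subseteq> {1..n}"
  using q_le[of "h+1" "rc+1"] q_last unfolding seg_def by auto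

lemma seg_ne: "h \<le> rc \<Longrightarrow> seg h \<noteq> {}"
  using q_less[of h "h+1"] unfolding seg_def by auto

lemma seg_loc: assumes "p \<in> {1..n}" shows "\<exists>h\<le>rc. p \<in> seg h"
proof -
  define H where "H = {h. h \<le> rc + 1 \<and> q!h < p}"
  have "0 \<in> H" using assms q0 unfolding H_def by auto
  have fH: "finite H" unfolding H_def by simp
  define h where "h = Max H"
  have hH: "h \<in> H" unfolding h_def using fH \<open>0 \<in> H\<close> by (intro Max_in) auto
  have "h \<noteq> rc + 1" using hH q_last assms unfolding H_def by auto
  hence hr: "h \<le> rc" using hH unfolding H_def by simp
  have "h + 1 \<notin> H"
  proof
    assume "h + 1 \<in> H" hence "h + 1 \<le> h" unfolding h_def using fH by simp
    thus False by simp
  qed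
  hence "p \<le> q!(h+1)" using hr unfolding H_def by auto
  moreover have "q!h < p" using hH unfolding H_def by simp
  ultimately show ?thesis using hr unfolding seg_def by auto
qed

lemma seg_order: assumes "a \<in> seg i" "b \<in> seg j" "i < j" "j \<le> rc" shows "a < b"
proof -
  have "q!(i+1) \<le> q!j" using q_le[of "i+1" j] assms by simp
  thus ?thesis using assms unfolding seg_def by auto
qed

lemma seg_uniq: assumes "a \<in> seg i" "a \<in> seg j" "i \<le> rc" "j \<le> rc" shows "i = j"
proof (rule ccontr)
  assume "i \<noteq> j"
  hence "i < j \<or> j < i" by linarith
  thus False using seg_order[of a i a j] seg_order[of a j a i] assms by auto
qed

lemma FF_len: "length (FF n R \<pi>) = rc + 1" by (simp add: FF_def)
lemma FF_nth: "h < rc + 1 \<Longrightarrow> FF n R \<pi> ! h = \<pi> ` seg h"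
  by (simp add: FF_def seg_def del: upt_Suc)

lemma Rperm_iff: "R_permutation n R \<pi> \<longleftrightarrow> \<pi> permutes {1..n} \<and> (\<forall>h\<le>rc. strict_mono_on (seg h) \<pi>)"
proof -
  have "(\<forall>h\<in>{1..rc + 1}. strict_mono_on {q ! (h - 1) + 1 .. q ! h} \<pi>) \<longleftrightarrow> (\<forall>h\<le>rc. strict_mono_on (seg h) \<pi>)"
  proof
    assume A: "\<forall>h\<in>{1..rc + 1}. strict_mono_on {q ! (h - 1) + 1 .. q ! h} \<pi>"
    show "\<forall>h\<le>rc. strict_mono_on (seg h) \<pi>"
    proof (intro allI impI)
      fix h assume "h \<le> rc"
      hence "h + 1 \<in> {1..rc+1}" by simp
      thus "strict_mono_on (seg h) \<pi>" using A unfolding seg_def by fastforce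
    qed
  next
    assume A: "\<forall>h\<le>rc. strict_mono_on (seg h) \<pi>"
    show "\<forall>h\<in>{1..rc + 1}. strict_mono_on {q ! (h - 1) + 1 .. q ! h} \<pi>"
    proof
      fix h assume h: "h \<in> {1..rc+1}"
      hence "h - 1 \<le> rc" "h - 1 + 1 = h" by auto
      thus "strict_mono_on {q ! (h - 1) + 1 .. q ! h} \<pi>" using A unfolding seg_def by metis
    qed
  qed
  thus ?thesis unfolding R_permutation_def R_card_def by simp
qed

lemma FF_osp: assumes p: "\<pi> permutes {1..n}" shows "ordered_set_partition n (FF n R \<pi>)"
  unfolding ordered_set_partition_def
proof (intro conjI allI impI)
  show "1 \<le> length (FF n R \<pi>)" by (simp add: FF_len)
  fix i assume "i < length (FF n R \<pi>)"
  thus "FF n R \<pi> ! i \<noteq> {}" using FF_nth[of i] seg_ne[of i] by (simp add: FF_len)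
next
  fix i j assume ij: "i < j \<and> j < length (FF n R \<pi>)"
  have inj: "inj \<pi>" using p by (rule permutes_inj)
  have "seg i \<inter> seg j = {}" using seg_uniq[of _ i j] ij by (auto simp: FF_len)
  thus "FF n R \<pi> ! i \<inter> FF n R \<pi> ! j = {}" using FF_nth[of i] FF_nth[of j] ij inj
    by (auto simp: FF_len inj_eq)
next
  have "set (FF n R \<pi>) = (\<lambda>h. \<pi> ` seg h) ` {0..<rc+1}"
    by (simp add: FF_def seg_def del: upt_Suc)
  hence "\<Union>(set (FF n R \<pi>)) = \<pi> ` (\<Union>h\<in>{0..<rc+1}. seg h)" by auto
  also have "(\<Union>h\<in>{0..<rc+1}. seg h) = {1..n}"
  proof (intro equalityI subsetI)
    fix x assume "x \<in> (\<Union>h\<in>{0..<rc+1}. seg h)"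
    then obtain h where "h < rc + 1" "x \<in> seg h" by auto
    thus "x \<in> {1..n}" using seg_sub[of h] by auto
  next
    fix x assume "x \<in> {1..n}"
    then obtain h where "h \<le> rc" "x \<in> seg h" using seg_loc by blast
    thus "x \<in> (\<Union>h\<in>{0..<rc+1}. seg h)" by auto
  qed
  also have "\<pi> ` {1..n} = {1..n}" using permutes_image[OF p] .
  finally show "\<Union>(set (FF n R \<pi>)) = {1..n}" .
qed

lemma avoid_iff_contain:
  assumes p: "\<pi> permutes {1..n}"
  shows "osp_avoids_312 (FF n R \<pi>) \<longleftrightarrow> \<not> R_312_containing n R \<pi>"
proof
  assume av: "osp_avoids_312 (FF n R \<pi>)"
  show "\<not> R_312_containing n R \<pi>"
  proof
    assume "R_312_containing n R \<pi>"
    then obtain h a b c where h: "h \<in> {1..rc-1}" and w: "1 \<le> a" "a \<le> q ! h" "q ! h < b" "b \<le> q ! (h + 1)"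
      "q ! (h + 1) < c" "c \<le> n" "\<pi> b < \<pi> c" "\<pi> c < \<pi> a"
      unfolding R_312_containing_def R_card_def by blast
    have hr: "1 \<le> h" "h + 1 \<le> rc" using h by auto
    have "q ! h \<le> n" using q_le[of h "rc+1"] q_last hr by simp
    obtain i where i: "i \<le> rc" "a \<in> seg i" using seg_loc[of a] w \<open>q ! h \<le> n\<close> by auto
    obtain l where l: "l \<le> rc" "c \<in> seg l" using seg_loc[of c] w by auto
    have bh: "b \<in> seg h" using w unfolding seg_def by simp
    have "i < h"
    proof (rule ccontr)
      assume "\<not> i < h"
      hence "q!h \<le> q!i" using q_le[of h i] i by simp
      thus False using i(2) w(2) unfolding seg_def by simp
    qed
    have "h < l"
    proof (rule ccontr)
      assume "\<not> h < l"
      hence "q!(l+1) \<le> q!(h+1)" using q_le[of "l+1" "h+1"] hr by simp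
      thus False using l(2) w(5) unfolding seg_def by simp
    qed
    have "\<pi> a \<in> FF n R \<pi> ! i" "\<pi> b \<in> FF n R \<pi> ! h" "\<pi> c \<in> FF n R \<pi> ! l"
      using FF_nth[of i] FF_nth[of h] FF_nth[of l] i l bh hr by auto
    moreover have "l < length (FF n R \<pi>)" using l by (simp add: FF_len)
    ultimately show False using av \<open>i < h\<close> \<open>h < l\<close> w unfolding osp_avoids_312_def by blast
  qed
next
  assume nc: "\<not> R_312_containing n R \<pi>"
  show "osp_avoids_312 (FF n R \<pi>)" unfolding osp_avoids_312_def
  proof
    assume "\<exists>i j l a b c. i < j \<and> j < l \<and> l < length (FF n R \<pi>) \<and> a \<in> FF n R \<pi> ! i \<and>
      b \<in> FF n R \<pi> ! j \<and> c \<in> FF n R \<pi> ! l \<and> b < c \<and> c < a"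
    then obtain i j l a b c where w: "i < j" "j < l" "l < rc + 1" "a \<in> FF n R \<pi> ! i"
      "b \<in> FF n R \<pi> ! j" "c \<in> FF n R \<pi> ! l" "b < c" "c < a" by (auto simp: FF_len)
    obtain a' where a': "a' \<in> seg i" "a = \<pi> a'" using w FF_nth[of i] by auto
    obtain b' where b': "b' \<in> seg j" "b = \<pi> b'" using w FF_nth[of j] by auto
    obtain c' where c': "c' \<in> seg l" "c = \<pi> c'" using w FF_nth[of l] by auto
    have "j \<in> {1..rc-1}" using w by auto
    moreover have "1 \<le> a'" "a' \<le> q!j" using a' q_le[of "i+1" j] w unfolding seg_def by auto
    moreover have "q!j < b'" "b' \<le> q!(j+1)" using b' unfolding seg_def by auto
    moreover have "q!(j+1) < c'" using c' q_le[of "j+1" l] w unfolding seg_def by auto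
    moreover have "c' \<le> n" using seg_sub[of l] c' w by auto
    ultimately have "R_312_containing n R \<pi>" unfolding R_312_containing_def R_card_def
      using a' b' c' w by blast
    thus False using nc by simp
  qed
qed

end


lemma rank_eq:
  assumes sm: "strict_mono_on A (f::nat \<Rightarrow> nat)" and x: "x \<in> A"
  shows "card {y \<in> f ` A. y < f x} = card {z \<in> A. z < x}"
proof -
  have "{y \<in> f ` A. y < f x} = f ` {z \<in> A. z < x}"
    using strict_mono_on_less[OF sm _ x] by auto
  moreover have "inj_on f {z \<in> A. z < x}"
    using strict_mono_on_imp_inj_on[OF sm] by (rule inj_on_subset) auto
  ultimately show ?thesis by (simp add: card_image)
qed

lemma mono_unique:
  assumes fA: "finite A" and sf: "strict_mono_on A (f::nat \<Rightarrow> nat)" and sg: "strict_mono_on A g"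
    and im: "f ` A = g ` A" and x: "x \<in> A"
  shows "f x = g x"
proof -
  have rf: "card {y \<in> f ` A. y < f x} = card {z \<in> A. z < x}" by (rule rank_eq[OF sf x])
  have rg: "card {y \<in> g ` A. y < g x} = card {z \<in> A. z < x}" by (rule rank_eq[OF sg x])
  have less: False if u: "u ` A = v ` A" "strict_mono_on A u" "strict_mono_on A v" "u x < v x"
    "card {y \<in> u ` A. y < u x} = card {z \<in> A. z < x}" "card {y \<in> v ` A. y < v x} = card {z \<in> A. z < x}"
    for u v :: "nat \<Rightarrow> nat"
  proof -
    have "u x \<in> v ` A" using u(1) x by blast
    hence "{y \<in> v ` A. y < u x} \<subset> {y \<in> v ` A. y < v x}" using u(4) by auto
    hence "card {y \<in> v ` A. y < u x} < card {y \<in> v ` A. y < v x}"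
      using fA by (intro psubset_card_mono) auto
    thus False using u(1,5,6) by simp
  qed
  show ?thesis
  proof (rule ccontr)
    assume "f x \<noteq> g x"
    hence "f x < g x \<or> g x < f x" by linarith
    thus False using less[of f g] less[of g f] im sf sg rf rg by metis
  qed
qed

context RR begin

lemma block_card: assumes p: "\<pi> permutes {1..n}" and h: "h \<le> rc"
  shows "card (FF n R \<pi> ! h) = q!(h+1) - q!h"
proof -
  have "FF n R \<pi> ! h = \<pi> ` seg h" using FF_nth h by simp
  moreover have "inj_on \<pi> (seg h)" using permutes_inj_on[OF p] .
  ultimately show ?thesis by (simp add: card_image seg_def)
qed

lemma q_sum: assumes p: "\<pi> permutes {1..n}" and h: "h \<le> rc + 1"
  shows "q!h = (\<Sum>i<h. card (FF n R \<pi> ! i))"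
  using h
proof (induction h)
  case 0 thus ?case using q0 by simp
next
  case (Suc h)
  have "q!(h+1) = q!h + card (FF n R \<pi> ! h)"
    using block_card[OF p, of h] q_le[of h "h+1"] Suc.prems by simp
  thus ?case using Suc by simp
qed

lemma R_from_q: "R = set q - {0, n}"
proof -
  have "0 \<notin> R" "n \<notin> R" using Rsub n1 by auto
  thus ?thesis using finR by (auto simp: qseq_def)
qed

end

lemma FF_inj:
  assumes A: "RR n R" "RR n R'" and p: "R_permutation n R \<pi>" "R_permutation n R' \<pi>'"
    and eq: "FF n R \<pi> = FF n R' \<pi>'"
  shows "R = R' \<and> \<pi> = \<pi>'"
proof -
  interpret a: RR n R by (rule A(1))
  interpret b: RR n R' by (rule A(2))
  have pa: "\<pi> permutes {1..n}" "\<forall>h\<le>card R. strict_mono_on (a.seg h) \<pi>" using p(1) a.Rperm_iff by auto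
  have pb: "\<pi>' permutes {1..n}" "\<forall>h\<le>card R'. strict_mono_on (b.seg h) \<pi>'" using p(2) b.Rperm_iff by auto
  have rc: "card R = card R'" using arg_cong[OF eq, of length] a.FF_len b.FF_len by simp
  have qq: "qseq n R = qseq n R'"
  proof (rule nth_equalityI)
    show "length (qseq n R) = length (qseq n R')" using a.q_len b.q_len rc by simp
    fix h assume "h < length (qseq n R)"
    hence h: "h \<le> card R + 1" using a.q_len by simp
    show "qseq n R ! h = qseq n R' ! h" using a.q_sum[OF pa(1) h] b.q_sum[OF pb(1)] h rc eq by simp
  qed
  have RR': "R = R'" using a.R_from_q b.R_from_q qq by simp
  have "\<pi> x = \<pi>' x" for x
  proof (cases "x \<in> {1..n}")
    case False thus ?thesis using permutes_not_in[OF pa(1)] permutes_not_in[OF pb(1)] by simp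
  next
    case True
    then obtain h where h: "h \<le> card R" "x \<in> a.seg h" using a.seg_loc by blast
    have sg: "a.seg h = b.seg h" unfolding a.seg_def b.seg_def using qq by simp
    have "\<pi> ` a.seg h = \<pi>' ` a.seg h" using a.FF_nth[of h \<pi>] b.FF_nth[of h \<pi>'] eq h rc sg by simp
    moreover have "strict_mono_on (a.seg h) \<pi>'" using pb(2) h rc sg by simp
    ultimately show ?thesis using mono_unique[of "a.seg h" \<pi> \<pi>' x] pa(2) h by (simp add: a.seg_def)
  qed
  thus ?thesis using RR' by auto
qed


lemma nth_concat_gen:
  "h < length xss \<Longrightarrow> t < length (xss!h) \<Longrightarrow>
   concat xss ! (sum_list (map length (take h xss)) + t) = xss!h!t"
proof (induction xss arbitrary: h)
  case Nil thus ?case by simp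
next
  case (Cons x xs)
  show ?case
  proof (cases h)
    case 0 thus ?thesis using Cons.prems by (simp add: nth_append)
  next
    case (Suc h')
    have "concat xs ! (sum_list (map length (take h' xs)) + t) = xs!h'!t"
      using Cons.IH[of h'] Cons.prems Suc by simp
    thus ?thesis using Suc by (simp add: nth_append add.assoc)
  qed
qed

lemma sum_list_map_nth: "sum_list (map f xs) = (\<Sum>i<length xs. f (xs!i))"
  by (simp add: sum_list_sum_nth atLeast0LessThan)

lemma sorted_list_set_id': "sorted_wrt (<) xs \<Longrightarrow> sorted_list_of_set (set xs) = xs"
  by (simp add: sorted_list_of_set_sort_remdups strict_sorted_iff distinct_remdups_id sorted_sort_id)

locale OC =
  fixes n :: nat and As :: "nat set list"
  assumes n1: "1 \<le> n" and osp: "ordered_set_partition n As"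
begin

abbreviation "k \<equiv> length As"
definition ls where "ls i = (if i < k then card (As!i) else 1)"
definition p where "p h = (\<Sum>i<h. ls i)"
definition sl where "sl i = sorted_list_of_set (As!i)"
definition w where "w = concat (map sorted_list_of_set As)"
definition RR0 where "RR0 = p ` {1..<k}"
definition pi0 where "pi0 i = (if i \<in> {1..n} then w!(i-1) else i)"

lemma k1: "1 \<le> k" using osp unfolding ordered_set_partition_def by simp
lemma As_ne: "As \<noteq> []" using k1 by (cases As) auto
lemma k_pos: "0 < k" using As_ne by simp
lemma finA: "i < k \<Longrightarrow> finite (As!i)"
  using osp_sub[OF osp] by (meson finite_atLeastAtMost finite_subset subsetI)
lemma neA: "i < k \<Longrightarrow> As!i \<noteq> {}" using osp unfolding ordered_set_partition_def by simp
lemma ls_pos: "1 \<le> ls i"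
  unfolding ls_def using finA neA by (simp add: Suc_leI card_gt_0_iff)
lemma p_Suc: "p (Suc h) = p h + ls h" unfolding p_def by simp
lemma p_mono: "strict_mono p"
  unfolding strict_mono_Suc_iff
proof
  fix h show "p h < p (Suc h)" using p_Suc[of h] ls_pos[of h] by simp
qed
lemma p0: "p 0 = 0" unfolding p_def by simp
lemma p_ge: "h \<le> p h"
proof (induction h)
  case 0 thus ?case by simp
next
  case (Suc h) thus ?case using p_Suc[of h] ls_pos[of h] by simp
qed
lemma p_k: "p k = n"
proof -
  have "card (\<Union>i\<in>{..<k}. As!i) = (\<Sum>i<k. card (As!i))"
  proof (rule card_UN_disjoint)
    show "\<forall>i\<in>{..<k}. finite (As!i)" using finA by simp
    show "\<forall>i\<in>{..<k}. \<forall>j\<in>{..<k}. i \<noteq> j \<longrightarrow> As!i \<inter> As!j = {}"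
    proof (intro ballI impI)
      fix i j assume "i \<in> {..<k}" "j \<in> {..<k}" "i \<noteq> j"
      thus "As!i \<inter> As!j = {}" using osp_uniq[OF osp, of i j] by auto
    qed
  qed simp
  moreover have "(\<Union>i\<in>{..<k}. As!i) = {1..n}"
  proof -
    have "(\<Union>i\<in>{..<k}. As!i) = \<Union>(set As)"
    proof (intro equalityI subsetI)
      fix x assume "x \<in> (\<Union>i\<in>{..<k}. As!i)"
      then obtain i where "i < k" "x \<in> As!i" by auto
      moreover have "As!i \<in> set As" using \<open>i < k\<close> by simp
      ultimately show "x \<in> \<Union>(set As)" by blast
    next
      fix x assume "x \<in> \<Union>(set As)"
      then obtain i where "i < k" "x \<in> As!i" by (auto simp: in_set_conv_nth)
      thus "x \<in> (\<Union>i\<in>{..<k}. As!i)" by auto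
    qed
    thus ?thesis using osp unfolding ordered_set_partition_def by simp
  qed
  moreover have "(\<Sum>i<k. card (As!i)) = p k" unfolding p_def ls_def by simp
  ultimately show ?thesis by simp
qed

lemma map_p: "map p [0..<k+1] = [0] @ map p [1..<k] @ [n]"
proof -
  have a: "[0..<k+1] = [0..<k] @ [k]" by simp
  have "0 < k" by (rule k_pos)
  hence b: "[0..<k] = 0 # [1..<k]" using upt_conv_Cons[of 0 k] by simp
  have "[0..<k+1] = [0] @ [1..<k] @ [k]" unfolding a b by simp
  thus ?thesis using p0 p_k by simp
qed

lemma sorted_R: "sorted_list_of_set RR0 = map p [1..<k]"
proof -
  have "sorted_wrt (<) (map p [1..<k])"
    using p_mono by (auto simp: sorted_wrt_iff_nth_less strict_mono_def)
  moreover have "set (map p [1..<k]) = RR0" unfolding RR0_def by simp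
  ultimately show ?thesis using sorted_list_set_id' by metis
qed

lemma card_R: "card RR0 = k - 1"
proof -
  have "length (sorted_list_of_set RR0) = k - 1" using sorted_R by simp
  thus ?thesis by simp
qed

lemma q_eq: "qseq n RR0 = map p [0..<k+1]"
  using map_p sorted_R unfolding qseq_def by simp

lemma R_sub: "RR0 \<subseteq> {1..n-1}"
proof
  fix x assume "x \<in> RR0"
  then obtain h where h: "1 \<le> h" "h < k" "x = p h" unfolding RR0_def by auto
  have "1 \<le> p h" using p_ge[of h] h by simp
  moreover have "p h < p k" using p_mono h unfolding strict_mono_def by simp
  ultimately show "x \<in> {1..n-1}" using h p_k by auto
qed

lemma RRi: "RR n RR0" using n1 R_sub by unfold_locales

lemma len_sl: "i < k \<Longrightarrow> length (sl i) = ls i" unfolding sl_def ls_def by simp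
lemma set_sl: "i < k \<Longrightarrow> set (sl i) = As!i" unfolding sl_def using finA by simp
lemma sorted_sl: "sorted_wrt (<) (sl i)" unfolding sl_def by simp

lemma sum_take: "h \<le> k \<Longrightarrow> sum_list (map length (take h (map sorted_list_of_set As))) = p h"
proof -
  assume h: "h \<le> k"
  have "sum_list (map length (take h (map sorted_list_of_set As))) = (\<Sum>i<h. length (sorted_list_of_set (As!i)))"
    using h by (simp add: sum_list_map_nth min_def)
  also have "\<dots> = p h" unfolding p_def ls_def using h by (intro sum.cong) auto
  finally show ?thesis .
qed

lemma w_nth: "h < k \<Longrightarrow> t < ls h \<Longrightarrow> w ! (p h + t) = sl h ! t"
  using nth_concat_gen[of h "map sorted_list_of_set As" t] sum_take[of h] len_sl[of h]
  unfolding w_def sl_def by simp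

lemma len_w: "length w = n"
proof -
  have "length w = sum_list (map length (map sorted_list_of_set As))" unfolding w_def by (simp add: length_concat)
  also have "\<dots> = p k" using sum_take[of k] by simp
  finally show ?thesis using p_k by simp
qed

lemma set_w: "set w = {1..n}"
proof -
  have "set w = \<Union>(set ` set (map sorted_list_of_set As))" unfolding w_def by simp
  also have "\<dots> = \<Union>(set As)"
  proof -
    have "\<And>A. A \<in> set As \<Longrightarrow> finite A" using finA by (auto simp: in_set_conv_nth)
    thus ?thesis by auto
  qed
  finally show ?thesis using osp unfolding ordered_set_partition_def by simp
qed

lemma dist_w: "distinct w"
  using len_w set_w by (simp add: card_distinct)

lemma pi0_perm: "pi0 permutes {1..n}"
proof (rule bij_imp_permutes)
  have b1: "bij_betw (\<lambda>i. i - 1) {1..n} {..<n}"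
    by (rule bij_betwI[where g = "\<lambda>i. i + 1"]) auto
  have b2: "bij_betw ((!) w) {..<n} {1..n}" using bij_betw_nth[OF dist_w] len_w set_w by simp
  have "bij_betw ((!) w \<circ> (\<lambda>i. i - 1)) {1..n} {1..n}" by (rule bij_betw_trans[OF b1 b2])
  thus "bij_betw pi0 {1..n} {1..n}" by (rule bij_betw_cong[THEN iffD1, rotated]) (simp add: pi0_def)
  fix x :: nat assume "x \<notin> {1..n}"
  thus "pi0 x = x" unfolding pi0_def by (simp only: if_False)
qed

lemma seg_eq: "h < k \<Longrightarrow> RR.seg n RR0 h = {p h + 1 .. p (h+1)}"
  using RR.seg_def[OF RRi] q_eq by (simp del: upt_Suc add: nth_map_upt)

lemma pi0_seg: assumes h: "h < k" and t: "t < ls h" shows "pi0 (p h + 1 + t) = sl h ! t"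
proof -
  have "p (h+1) \<le> p k" using h p_mono by (simp add: strict_mono_less_eq)
  hence "p h + 1 + t \<in> {1..n}" using p_Suc[of h] t p_k by auto
  thus ?thesis using w_nth[OF h t] unfolding pi0_def by simp
qed

lemma pi0_Rperm: "R_permutation n RR0 pi0"
proof -
  have "\<forall>h\<le>card RR0. strict_mono_on (RR.seg n RR0 h) pi0"
  proof (intro allI impI)
    fix h assume "h \<le> card RR0"
    hence h: "h < k" using card_R k1 by simp
    show "strict_mono_on (RR.seg n RR0 h) pi0"
    proof (rule strict_mono_onI)
      fix r s assume rs: "r \<in> RR.seg n RR0 h" "s \<in> RR.seg n RR0 h" "r < s"
      define tr where "tr = r - (p h + 1)"
      define ts where "ts = s - (p h + 1)"
      have e: "r = p h + 1 + tr" "s = p h + 1 + ts" "tr < ts" "ts < ls h"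
        using rs seg_eq[OF h] p_Suc[of h] unfolding tr_def ts_def by auto
      have "sl h ! tr < sl h ! ts" using sorted_sl[of h] e len_sl[OF h]
        by (auto simp: sorted_wrt_iff_nth_less)
      thus "pi0 r < pi0 s" using e pi0_seg[OF h] by simp
    qed
  qed
  thus ?thesis using RR.Rperm_iff[OF RRi] pi0_perm by simp
qed

lemma FF_eq: "FF n RR0 pi0 = As"
proof (rule nth_equalityI)
  show "length (FF n RR0 pi0) = length As" using RR.FF_len[OF RRi] card_R k1 by simp
  fix h assume "h < length (FF n RR0 pi0)"
  hence h: "h < k" using RR.FF_len[OF RRi] card_R k1 by simp
  have "FF n RR0 pi0 ! h = pi0 ` RR.seg n RR0 h" using RR.FF_nth[OF RRi, of h] h card_R k1 by simp
  also have "\<dots> = As!h"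
  proof (intro equalityI subsetI)
    fix y assume "y \<in> pi0 ` RR.seg n RR0 h"
    then obtain r where r: "r \<in> {p h + 1 .. p (h+1)}" "y = pi0 r" using seg_eq[OF h] by auto
    define t where "t = r - (p h + 1)"
    have "r = p h + 1 + t" "t < ls h" using r p_Suc[of h] unfolding t_def by auto
    hence "y = sl h ! t" using r pi0_seg[OF h] by simp
    hence "y \<in> set (sl h)" using \<open>t < ls h\<close> len_sl[OF h] by simp
    thus "y \<in> As!h" using set_sl[OF h] by simp
  next
    fix y assume "y \<in> As!h"
    hence "y \<in> set (sl h)" using set_sl[OF h] by simp
    then obtain t where t: "t < ls h" "y = sl h ! t" using len_sl[OF h] by (auto simp: in_set_conv_nth)
    have "p h + 1 + t \<in> RR.seg n RR0 h" using seg_eq[OF h] p_Suc[of h] t by simp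
    moreover have "pi0 (p h + 1 + t) = y" using pi0_seg[OF h t(1)] t by simp
    ultimately show "y \<in> pi0 ` RR.seg n RR0 h" by blast
  qed
  finally show "FF n RR0 pi0 ! h = As ! h" .
qed

end


lemma Rperm_permutes: "R_permutation n R \<pi> \<Longrightarrow> \<pi> permutes {1..n}"
  unfolding R_permutation_def by (elim conjE)

lemma card_sigma_osp:
  assumes n1: "1 \<le> n"
  shows "C_Sigma n = card {As. ordered_set_partition n As \<and> osp_avoids_312 As}"
proof -
  define P where "P R = {\<pi>. R_permutation n R \<pi> \<and> \<not> R_312_containing n R \<pi>}" for R
  define S where "S = {As. ordered_set_partition n As \<and> osp_avoids_312 As}"
  have finP: "\<forall>R\<in>Pow {1..n-1}. finite (P R)"
  proof
    fix R
    have "P R \<subseteq> {\<pi>. \<pi> permutes {1..n}}"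
    proof
      fix \<pi> assume "\<pi> \<in> P R"
      hence "R_permutation n R \<pi>" unfolding P_def by simp
      hence "\<pi> permutes {1..n}" by (rule Rperm_permutes)
      thus "\<pi> \<in> {\<pi>. \<pi> permutes {1..n}}" by simp
    qed
    thus "finite (P R)" using finite_permutations[of "{1..n}"] finite_subset by blast
  qed
  have "C_Sigma n = (\<Sum>R\<in>Pow {1..n-1}. card (P R))" unfolding C_Sigma_def C_R_def P_def by simp
  also have "\<dots> = card (Sigma (Pow {1..n-1}) P)"
  proof -
    have "finite (Pow {1..n-1})" by simp
    from card_SigmaI[OF this finP] show ?thesis by (rule sym)
  qed
  also have "\<dots> = card S"
  proof (rule bij_betw_same_card)
    show "bij_betw (\<lambda>(R, \<pi>). FF n R \<pi>) (Sigma (Pow {1..n-1}) P) S"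
      unfolding bij_betw_def
    proof
      show "inj_on (\<lambda>(R, \<pi>). FF n R \<pi>) (Sigma (Pow {1..n-1}) P)"
      proof (rule inj_onI)
        fix x y assume x: "x \<in> Sigma (Pow {1..n-1}) P" and y: "y \<in> Sigma (Pow {1..n-1}) P"
          and e0: "(\<lambda>(R, \<pi>). FF n R \<pi>) x = (\<lambda>(R, \<pi>). FF n R \<pi>) y"
        obtain R \<pi> where xe: "x = (R, \<pi>)" by (cases x)
        obtain R' \<pi>' where ye: "y = (R', \<pi>')" by (cases y)
        have "(R, \<pi>) \<in> Sigma (Pow {1..n-1}) P" "(R', \<pi>') \<in> Sigma (Pow {1..n-1}) P" using x y xe ye by simp_all
        hence a: "R \<in> Pow {1..n-1}" "\<pi> \<in> P R" "R' \<in> Pow {1..n-1}" "\<pi>' \<in> P R'" by (simp_all only: mem_Sigma_iff)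
        have e: "FF n R \<pi> = FF n R' \<pi>'" using e0 xe ye by simp
        have "RR n R" "RR n R'" using a n1 by (unfold_locales, auto)+
        moreover have "R_permutation n R \<pi>" "R_permutation n R' \<pi>'" using a unfolding P_def by auto
        ultimately have "R = R' \<and> \<pi> = \<pi>'" using FF_inj[OF _ _ _ _ e] by blast
        thus "x = y" using xe ye by simp
      qed
      show "(\<lambda>(R, \<pi>). FF n R \<pi>) ` Sigma (Pow {1..n-1}) P = S"
      proof (intro equalityI subsetI)
        fix As assume "As \<in> (\<lambda>(R, \<pi>). FF n R \<pi>) ` Sigma (Pow {1..n-1}) P"
        then obtain x where x: "x \<in> Sigma (Pow {1..n-1}) P" "As = (\<lambda>(R, \<pi>). FF n R \<pi>) x" by (rule imageE)
        obtain R \<pi> where xe: "x = (R, \<pi>)" by (cases x)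
        have "(R, \<pi>) \<in> Sigma (Pow {1..n-1}) P" using x(1) xe by simp
        hence a12: "R \<in> Pow {1..n-1}" "\<pi> \<in> P R" by (simp_all only: mem_Sigma_iff)
        have a3: "As = FF n R \<pi>" using x(2) xe by simp
        note a = a12 a3
        interpret RR n R using a n1 by unfold_locales auto
        have "R_permutation n R \<pi>" using a(2) unfolding P_def by simp
        hence p: "\<pi> permutes {1..n}" by (rule Rperm_permutes)
        have "osp_avoids_312 As" using a(2,3) avoid_iff_contain[OF p] unfolding P_def by simp
        thus "As \<in> S" using FF_osp[OF p] a(3) unfolding S_def by simp
      next
        fix As assume "As \<in> S"
        hence o: "ordered_set_partition n As" "osp_avoids_312 As" unfolding S_def by auto
        interpret OC n As using n1 o(1) by unfold_locales
        interpret r: RR n RR0 by (rule RRi)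
        have "\<not> R_312_containing n RR0 pi0" using r.avoid_iff_contain[OF pi0_perm] FF_eq o(2) by simp
        hence "pi0 \<in> P RR0" using pi0_Rperm unfolding P_def by simp
        moreover have "RR0 \<in> Pow {1..n-1}" using R_sub by simp
        ultimately have "(RR0, pi0) \<in> Sigma (Pow {1..n-1}) P" by simp
        moreover have "As = (\<lambda>(R, \<pi>). FF n R \<pi>) (RR0, pi0)" using FF_eq by simp
        ultimately show "As \<in> (\<lambda>(R, \<pi>). FF n R \<pi>) ` Sigma (Pow {1..n-1}) P" by (rule rev_image_eqI)
      qed
    qed
  qed
  finally show ?thesis unfolding S_def .
qed

theorem corollary9p2:
  fixes n :: nat
  assumes "n \<ge> 1"
  shows "C_Sigma n = card {As. ordered_set_partition n As \<and> osp_avoids_312 As}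
       \<and> C_Sigma n = card {Bs. rcd_chain n Bs}
       \<and> C_Sigma n = card {T. \<exists>lam. is_partition n lam \<and> distinct_short_cols n lam \<and>
                                   gapless_key n lam T}"
  using card_sigma_osp[OF assms] card_osp_chain[of n] card_chain_key[OF assms] by simp


end
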